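(* Let $\mathcal{X}$ and $\mathcal{Z}$ be Euclidean spaces. Let $\mathfrak{S}:\mathcal{X}\to\mathcal{Z}$ be a differentiable mapping such that $\mathfrak{S}$ and its G\^ateaux derivative $\mathrm{D}\mathfrak{S}$ are Lipschitz continuous; let $g:\mathcal{Z}\to\mathbb{R}$ be Lipschitz continuous and $\eta$-weakly convex for some $\eta>0$ (i.e. $g+\frac{\eta}{2}\|\cdot\|^2$ is convex); let $C\subset\mathcal{X}$ be a nonempty closed prox-regular set; set $F:=g\circ\mathfrak{S}$ and assume $\mathop{\mathrm{argmin}}_{x\in C}F(x)\neq\emptyset$. Then a point $x^\star\in\mathcal{X}$ satisfies $0\in\partial_F(F+\iota_C)(x^\star)$ (i.e. $x^\star$ is a stationary point of the problem of minimizing $F$ over $C$) if and only if $\mathcal{M}_{\gamma}^{F,\iota_C}(x^\star)=0$ for some $\gamma>0$.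
   Context: Prox-regularity of $C$: the metric projection $P_C:\mathcal{X}\rightrightarrows C$, $P_C(\bar x):=\mathop{\mathrm{argmin}}_{x\in C}\|\bar x-x\|$, is single-valued on some open subset of $\mathcal{X}$ containing $C$. The indicator function $\iota_C$ equals $0$ on $C$ and $+\infty$ outside $C$. For a proper function $J:\mathcal{X}\to\mathbb{R}\cup\{+\infty\}$, the Fr\'echet subdifferential $\partial_F J(\bar x)$ at $\bar x\in\mathrm{dom}\,J$ is the set of $v\in\mathcal{X}$ with $\sup_{\epsilon>0}\inf_{0<\|x-\bar x\|<\epsilon}\frac{J(x)-J(\bar x)-\langle v,x-\bar x\rangle}{\|x-\bar x\|}\ge 0$, and $\partial_F J(\bar x):=\emptyset$ for $\bar x\notin\mathrm{dom}\,J$. For $\gamma>0$ and $\bar x\in\mathcal{X}$, the stationarity measure is $\mathcal{M}_{\gamma}^{F,\iota_C}(\bar x):=\mathrm{dist}\big(0,\{(\bar x-p)/\gamma : p\in P_C(\bar x-\gamma v),\ v\in\partial_F F(\bar x)\}\big)$, where $\mathrm{dist}(0,S)=\inf_{s\in S}\|s\|$. *)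

theory Defs
  imports "HOL-Analysis.Analysis" "HOL-Library.Extended_Real"
begin

definition proj :: "'a::euclidean_space set \<Rightarrow> 'a \<Rightarrow> 'a set" where
  "proj C xb = {x \<in> C. \<forall>y\<in>C. norm (xb - x) \<le> norm (xb - y)}"

definition prox_regular :: "'a::euclidean_space set \<Rightarrow> bool" where
  "prox_regular C \<longleftrightarrow> (\<exists>U. open U \<and> C \<subseteq> U \<and> (\<forall>x\<in>U. \<exists>!p. p \<in> proj C x))"

definition ind :: "'a set \<Rightarrow> 'a \<Rightarrow> ereal" where
  "ind C x = (if x \<in> C then 0 else \<infinity>)"

definition frechet_subdiff :: "('a::euclidean_space \<Rightarrow> ereal) \<Rightarrow> 'a \<Rightarrow> 'a set" where
  "frechet_subdiff J xb =
     (if J xb = \<infinity> then {} else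
      {v. (SUP \<epsilon>\<in>{0<..}. INF x\<in>{x. 0 < norm (x - xb) \<and> norm (x - xb) < \<epsilon>}.
             (J x - J xb - ereal (v \<bullet> (x - xb))) / ereal (norm (x - xb))) \<ge> 0})"

text \<open>Stationarity measure M_gamma^{F, iota_C}; dist(0, empty) = +infinity.\<close>
definition stat_measure :: "('a::euclidean_space \<Rightarrow> real) \<Rightarrow> 'a set \<Rightarrow> real \<Rightarrow> 'a \<Rightarrow> ereal" where
  "stat_measure F C \<gamma> xb =
     (INF s \<in> {(1 / \<gamma>) *\<^sub>R (xb - p) | p v.
                 v \<in> frechet_subdiff (\<lambda>x. ereal (F x)) xb \<and> p \<in> proj C (xb - \<gamma> *\<^sub>R v)}.
        ereal (norm s))"

end

theory Submission
  imports Defs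
begin
lemma proj_iff: "p \<in> proj C x \<longleftrightarrow> p \<in> C \<and> (\<forall>y\<in>C. norm (x - p) \<le> norm (x - y))"
  by (simp add: proj_def)

lemma proj_exists:
  fixes C :: "'a::euclidean_space set"
  assumes "closed C" "C \<noteq> {}"
  obtains p where "p \<in> proj C x"
proof -
  obtain p where "p \<in> C" "\<And>y. y \<in> C \<Longrightarrow> dist x p \<le> dist x y"
    using distance_attains_inf[OF assms, of x] by blast
  then show ?thesis using that by (auto simp: proj_def dist_norm)
qed

lemma proj_infdist:
  fixes C :: "'a::euclidean_space set"
  assumes "p \<in> proj C x"
  shows "infdist x C = norm (x - p)"
proof -
  have pC: "p \<in> C" and m: "\<And>y. y \<in> C \<Longrightarrow> norm (x - p) \<le> norm (x - y)"
    using assms by (auto simp: proj_def)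
  have "infdist x C \<le> norm (x - p)" using infdist_le[OF pC, of x] by (simp add: dist_norm)
  moreover have "norm (x - p) \<le> infdist x C"
  proof -
    have "C \<noteq> {}" using pC by auto
    then have "infdist x C = (INF a\<in>C. dist x a)" by (rule infdist_notempty)
    also have "norm (x - p) \<le> (INF a\<in>C. dist x a)"
      using pC m \<open>C \<noteq> {}\<close> by (intro cINF_greatest) (auto simp: dist_norm)
    finally show ?thesis by simp
  qed
  ultimately show ?thesis by simp
qed

lemma infdist_le_norm: "c \<in> C \<Longrightarrow> infdist x C \<le> norm (x - c)"
  using infdist_le[of c C x] by (simp add: dist_norm)

lemma proj_iff_infdist:
  fixes C :: "'a::euclidean_space set"
  shows "p \<in> proj C x \<longleftrightarrow> p \<in> C \<and> norm (x - p) \<le> infdist x C"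
proof
  assume h: "p \<in> proj C x" then show "p \<in> C \<and> norm (x - p) \<le> infdist x C"
    using proj_infdist[OF h] by (simp add: proj_def)
next
  assume "p \<in> C \<and> norm (x - p) \<le> infdist x C"
  then show "p \<in> proj C x" unfolding proj_def
    using infdist_le_norm[of _ C x] by (auto intro: order_trans)
qed

lemma proj_ray_shrink:
  fixes C :: "'a::euclidean_space set"
  assumes "p \<in> proj C (p + t *\<^sub>R z)" "0 \<le> s" "s \<le> t"
  shows "p \<in> proj C (p + s *\<^sub>R z)"
proof -
  have pC: "p \<in> C" and m: "\<And>y. y \<in> C \<Longrightarrow> norm (t *\<^sub>R z) \<le> norm (p + t *\<^sub>R z - y)"
    using assms by (auto simp: proj_def)
  have "norm (s *\<^sub>R z) \<le> norm (p + s *\<^sub>R z - y)" if y: "y \<in> C" for y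
  proof -
    have "p + t *\<^sub>R z - y = (p + s *\<^sub>R z - y) + (t - s) *\<^sub>R z" by (simp add: algebra_simps)
    then have "norm (p + t *\<^sub>R z - y) \<le> norm (p + s *\<^sub>R z - y) + norm ((t - s) *\<^sub>R z)"
      by (metis norm_triangle_ineq)
    then have "norm (p + t *\<^sub>R z - y) \<le> norm (p + s *\<^sub>R z - y) + (t - s) * norm z"
      using assms by simp
    moreover have "norm (t *\<^sub>R z) = t * norm z" "norm (s *\<^sub>R z) = s * norm z" using assms by auto
    moreover have "t * norm z \<le> norm (p + t *\<^sub>R z - y)" using m[OF y] assms(2,3) by simp
    ultimately show ?thesis by (simp only:) (auto simp: algebra_simps)
  qed
  then show ?thesis using pC by (auto simp: proj_def)
qed

lemma proj_cont:
  fixes C :: "'a::euclidean_space set"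
  assumes cl: "closed C" and uq: "\<And>q'. q' \<in> proj C z \<Longrightarrow> q' = q" and qz: "q \<in> proj C z" and e: "e > 0"
  shows "\<exists>\<delta>>0. \<forall>x q'. norm (x - z) < \<delta> \<longrightarrow> q' \<in> proj C x \<longrightarrow> norm (q' - q) < e"
proof -
  define D where "D = norm (z - q)"
  define K where "K = cball z (D + 1) \<inter> (C \<inter> {c. e \<le> norm (c - q)})"
  have Kc: "compact K" unfolding K_def
    by (intro compact_Int_closed closed_Int compact_cball cl closed_Collect_le continuous_intros)
  have key: "\<exists>\<delta>>0. \<forall>c\<in>K. D + \<delta> \<le> norm (z - c)"
  proof (cases "K = {}")
    case True then show ?thesis by (auto intro: exI[of _ 1])
  next
    case False
    have "continuous_on K (\<lambda>c. norm (z - c))" by (intro continuous_intros)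
    then obtain k where kK: "k \<in> K" and kmin: "\<And>c. c \<in> K \<Longrightarrow> norm (z - k) \<le> norm (z - c)"
      using continuous_attains_inf[OF Kc False, of "\<lambda>c. norm (z - c)"] by blast
    have "k \<noteq> q" using kK e by (auto simp: K_def)
    then have "k \<notin> proj C z" using uq by blast
    then obtain y where "y \<in> C" "norm (z - y) < norm (z - k)" using kK by (auto simp: proj_def K_def not_le)
    moreover have "D \<le> norm (z - y)" using qz \<open>y \<in> C\<close> by (auto simp: proj_def D_def)
    ultimately have "D < norm (z - k)" by simp
    then show ?thesis using kmin
      by (intro exI[of _ "norm (z - k) - D"]) auto
  qed
  then obtain \<delta> where d0: "\<delta> > 0" and dK: "\<And>c. c \<in> K \<Longrightarrow> D + \<delta> \<le> norm (z - c)" by blast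
  show ?thesis
  proof (intro exI[of _ "min (1/2) (\<delta>/2)"] conjI allI impI)
    show "0 < min (1/2) (\<delta>/2)" using d0 by simp
    fix x q' assume xz: "norm (x - z) < min (1/2) (\<delta>/2)" and q': "q' \<in> proj C x"
    have q'C: "q' \<in> C" using q' by (simp add: proj_def)
    have qC: "q \<in> C" using qz by (simp add: proj_def)
    have "norm (x - q') \<le> norm (x - q)" using q' qC by (simp add: proj_def)
    have "norm (z - q') \<le> norm (x - q') + norm (x - z)" using norm_triangle_ineq[of "x - q'" "z - x"]
      by (simp add: norm_minus_commute)
    also have "\<dots> \<le> norm (x - q) + norm (x - z)" using \<open>norm (x - q') \<le> norm (x - q)\<close> by simp
    also have "\<dots> \<le> D + 2 * norm (x - z)" using norm_triangle_ineq[of "x - z" "z - q"] unfolding D_def by simp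
    finally have zq': "norm (z - q') \<le> D + 2 * norm (x - z)" .
    show "norm (q' - q) < e"
    proof (rule ccontr)
      assume "\<not> norm (q' - q) < e"
      then have "q' \<in> K" using zq' xz q'C by (auto simp: K_def dist_norm)
      then have "D + \<delta> \<le> norm (z - q')" by (rule dK)
      then show False using zq' xz by simp
    qed
  qed
qed

lemma norm_add_sq: "(norm (a + b))\<^sup>2 = (norm a)\<^sup>2 + 2 * inner a b + (norm (b::'a::real_inner))\<^sup>2"
  using dot_norm[of a b] by simp

lemma norm_diff_sq: "(norm (a - b))\<^sup>2 = (norm a)\<^sup>2 - 2 * inner a b + (norm (b::'a::real_inner))\<^sup>2"
  using dot_norm_neg[of a b] by simp

lemma proj_push:
  fixes C :: "'a::euclidean_space set"
  assumes cl: "closed C" and uq: "\<And>q'. q' \<in> proj C z \<Longrightarrow> q' = q" and qz: "q \<in> proj C z"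
    and zq: "z \<noteq> q" and e0: "0 < \<epsilon>" and e1: "\<epsilon> < 1"
  shows "\<exists>h0>0. \<forall>h c. 0 < h \<and> h \<le> h0 \<and> c \<in> C \<longrightarrow>
           norm (z - q) + (1 - \<epsilon>) * h \<le> norm (z + (h / norm (z - q)) *\<^sub>R (z - q) - c)"
proof -
  define D where "D = norm (z - q)"
  have D0: "D > 0" using zq by (simp add: D_def)
  define \<nu> where "\<nu> = (1 / D) *\<^sub>R (z - q)"
  have nu1: "norm \<nu> = 1" using D0 by (simp add: \<nu>_def D_def)
  have nuzq: "inner \<nu> (z - q) = D"
    using D0 by (simp add: \<nu>_def D_def power2_norm_eq_inner[symmetric] power2_eq_square)
  have CnE: "C \<noteq> {}" using qz by (auto simp: proj_def)
  obtain \<delta> where d0: "\<delta> > 0" and dprop: "\<And>x q'. norm (x - z) < \<delta> \<Longrightarrow> q' \<in> proj C x \<Longrightarrow> norm (q' - q) < \<epsilon> * D / 2"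
    using proj_cont[OF cl uq qz, of "\<epsilon> * D / 2"] e0 D0 by auto
  show ?thesis
  proof (intro exI[of _ "min (\<delta>/2) (\<epsilon> * D)"] conjI allI impI)
    show "0 < min (\<delta>/2) (\<epsilon> * D)" using d0 e0 D0 by simp
    fix h c assume hc: "0 < h \<and> h \<le> min (\<delta>/2) (\<epsilon> * D) \<and> c \<in> C"
    have hpos: "0 < h" and hd: "h < \<delta>" and heD: "h \<le> \<epsilon> * D" and cC: "c \<in> C" using hc d0 by auto
    have eq: "z + (h / norm (z - q)) *\<^sub>R (z - q) = z + h *\<^sub>R \<nu>" by (simp add: \<nu>_def D_def)
    define y where "y = z + h *\<^sub>R \<nu>"
    obtain q' where q': "q' \<in> proj C y" using proj_exists[OF cl CnE] by blast
    have "norm (y - z) < \<delta>" using hpos hd nu1 by (simp add: y_def)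
    then have qq': "norm (q' - q) < \<epsilon> * D / 2" using dprop q' by blast
    have q'C: "q' \<in> C" using q' by (simp add: proj_def)
    have yc: "norm (y - q') \<le> norm (y - c)" using q' cC by (simp add: proj_def)
    have zq': "D \<le> norm (z - q')" using qz q'C by (simp add: proj_def D_def)
    have "inner \<nu> (q - q') \<ge> - norm (q - q')"
      using Cauchy_Schwarz_ineq2[of \<nu> "q - q'"] nu1 by auto
    then have inner_lb: "inner \<nu> (z - q') \<ge> D - \<epsilon> * D / 2"
      using nuzq qq' by (simp add: inner_diff_right norm_minus_commute)
    have "(norm (y - q'))\<^sup>2 = (norm (z - q'))\<^sup>2 + 2 * h * inner (z - q') \<nu> + h\<^sup>2"
      using norm_add_sq[of "z - q'" "h *\<^sub>R \<nu>"] nu1 by (simp add: y_def algebra_simps)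
    also have "\<dots> \<ge> D\<^sup>2 + 2 * h * (D - \<epsilon> * D / 2) + h\<^sup>2"
    proof -
      have "D\<^sup>2 \<le> (norm (z - q'))\<^sup>2" using zq' D0 by (simp add: power_mono)
      moreover have "2 * h * (D - \<epsilon> * D / 2) \<le> 2 * h * inner (z - q') \<nu>"
        using inner_lb hpos by (simp add: inner_commute)
      ultimately show ?thesis by simp
    qed
    finally have sq: "D\<^sup>2 + 2 * h * (D - \<epsilon> * D / 2) + h\<^sup>2 \<le> (norm (y - q'))\<^sup>2" .
    have "(D + (1 - \<epsilon>) * h)\<^sup>2 \<le> D\<^sup>2 + 2 * h * (D - \<epsilon> * D / 2) + h\<^sup>2"
    proof -
      have a: "(D + (1 - \<epsilon>) * h)\<^sup>2 = D\<^sup>2 + 2 * (h * D) - 2 * (\<epsilon> * h * D) + (1 - \<epsilon>)\<^sup>2 * h\<^sup>2"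
        by (simp add: power2_eq_square algebra_simps)
      have b: "D\<^sup>2 + 2 * h * (D - \<epsilon> * D / 2) + h\<^sup>2 = D\<^sup>2 + 2 * (h * D) - (\<epsilon> * h * D) + h\<^sup>2"
        by (simp add: algebra_simps)
      have c: "(1 - \<epsilon>)\<^sup>2 * h\<^sup>2 \<le> h\<^sup>2" using e0 e1
        by (intro mult_left_le_one_le) (auto simp: power_le_one)
      have d: "0 \<le> \<epsilon> * h * D" using e0 hpos D0 by simp
      show ?thesis unfolding a b using c d by linarith
    qed
    with sq have "(D + (1 - \<epsilon>) * h)\<^sup>2 \<le> (norm (y - q'))\<^sup>2" by linarith
    then have "D + (1 - \<epsilon>) * h \<le> norm (y - q')" by (rule power2_le_imp_le) simp
    with yc show "norm (z - q) + (1 - \<epsilon>) * h \<le> norm (z + (h / norm (z - q)) *\<^sub>R (z - q) - c)"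
      unfolding eq y_def D_def by simp
  qed
qed

lemma reach_step:
  fixes C :: "'a::euclidean_space set"
  assumes cl: "closed C" and uqU: "\<And>x. x \<in> U \<Longrightarrow> \<exists>!p. p \<in> proj C x"
    and pT: "p \<in> proj C (p + T *\<^sub>R \<zeta>)" and nz: "norm \<zeta> = 1" and T0: "T > 0"
    and d0: "0 < \<delta>" and dT: "\<delta> < T" and sub: "cball (p + T *\<^sub>R \<zeta>) \<delta> \<subseteq> U"
  shows "p \<in> proj C (p + (T + \<delta>) *\<^sub>R \<zeta>)"
proof -
  define y0 where "y0 = p + T *\<^sub>R \<zeta>"
  have pC: "p \<in> C" using pT by (simp add: proj_def)
  have CnE: "C \<noteq> {}" using pC by auto
  have iy0: "infdist y0 C = T" using proj_infdist[OF pT] nz T0 by (simp add: y0_def)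
  have contd: "continuous_on A (\<lambda>z. infdist z C)" for A by (intro continuous_intros)
  have claim: "\<exists>z\<in>cball y0 \<delta>. T + (1 - \<epsilon>) * \<delta> \<le> infdist z C" if e0: "0 < \<epsilon>" and e1: "\<epsilon> < 1" for \<epsilon>
  proof -
    define B where "B = {s \<in> {0..\<delta>}. \<exists>z\<in>cball y0 s. T + (1 - \<epsilon>) * s \<le> infdist z C}"
    have B0: "0 \<in> B" using d0 iy0 by (auto simp: B_def intro!: bexI[of _ y0])
    have Bbd: "bdd_above B" by (auto simp: B_def bdd_above_def)
    define S where "S = Sup B"
    have S0: "0 \<le> S" using cSup_upper[OF B0 Bbd] by (simp add: S_def)
    have Sd: "S \<le> \<delta>" unfolding S_def using B0 by (intro cSup_least) (auto simp: B_def)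
    obtain zS where zS: "zS \<in> cball y0 S" and zSmax: "\<And>z. z \<in> cball y0 S \<Longrightarrow> infdist z C \<le> infdist zS C"
      using continuous_attains_sup[OF compact_cball _ contd, of y0 S] S0 by auto
    have "s \<le> (infdist zS C - T) / (1 - \<epsilon>)" if sB: "s \<in> B" for s
    proof -
      have sS: "s \<le> S" using cSup_upper[OF sB Bbd] by (simp add: S_def)
      obtain z where z: "z \<in> cball y0 s" "T + (1 - \<epsilon>) * s \<le> infdist z C" using sB by (auto simp: B_def)
      have "z \<in> cball y0 S" using z sS by auto
      then have "T + (1 - \<epsilon>) * s \<le> infdist zS C" using zSmax z by force
      then show ?thesis using e1 by (simp add: field_simps)
    qed
    then have "S \<le> (infdist zS C - T) / (1 - \<epsilon>)" unfolding S_def using B0 by (intro cSup_least) auto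
    then have SzS: "T + (1 - \<epsilon>) * S \<le> infdist zS C" using e1 by (simp add: field_simps)
    show ?thesis
    proof (cases "S = \<delta>")
      case True then show ?thesis using zS SzS by auto
    next
      case False
      then have Sd': "S < \<delta>" using Sd by simp
      have zU: "zS \<in> U" using sub zS Sd unfolding y0_def by (auto simp: subset_iff)
      obtain q where qz: "q \<in> proj C zS" and uq: "\<And>q'. q' \<in> proj C zS \<Longrightarrow> q' = q"
        using uqU[OF zU] by blast
      have izS: "infdist zS C = norm (zS - q)" using proj_infdist[OF qz] .
      have "T + (1 - \<epsilon>) * S > 0" using T0 S0 e1 by (simp add: add_pos_nonneg)
      then have zq: "zS \<noteq> q" using SzS izS by auto
      obtain h0 where h0: "h0 > 0" and hp: "\<And>h c. 0 < h \<Longrightarrow> h \<le> h0 \<Longrightarrow> c \<in> C \<Longrightarrow>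
           norm (zS - q) + (1 - \<epsilon>) * h \<le> norm (zS + (h / norm (zS - q)) *\<^sub>R (zS - q) - c)"
        using proj_push[OF cl uq qz zq e0 e1] by blast
      define h where "h = min h0 (\<delta> - S)"
      have h0': "0 < h" "h \<le> h0" "h \<le> \<delta> - S" using h0 Sd' by (auto simp: h_def)
      define z' where "z' = zS + (h / norm (zS - q)) *\<^sub>R (zS - q)"
      have "norm (z' - zS) = h" using zq h0' by (simp add: z'_def)
      then have "dist y0 z' \<le> S + h" using zS norm_triangle_ineq[of "zS - y0" "z' - zS"]
        by (simp add: dist_norm norm_minus_commute)
      then have z'b: "z' \<in> cball y0 (S + h)" by simp
      obtain q'' where q'': "q'' \<in> proj C z'" using proj_exists[OF cl CnE] by blast
      have "q'' \<in> C" using q'' by (simp add: proj_def)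
      then have "norm (zS - q) + (1 - \<epsilon>) * h \<le> infdist z' C"
        using hp[OF h0'(1,2)] proj_infdist[OF q''] by (simp add: z'_def)
      then have "T + (1 - \<epsilon>) * (S + h) \<le> infdist z' C" using SzS izS by (simp add: algebra_simps)
      then have hB: "S + h \<in> B" using z'b S0 h0' by (auto simp: B_def)
      have "S + h \<le> Sup B" by (rule cSup_upper[OF hB Bbd])
      then have "S + h \<le> S" by (simp add: S_def)
      then show ?thesis using h0' by simp
    qed
  qed
  obtain zm where zm: "zm \<in> cball y0 \<delta>" and zmmax: "\<And>z. z \<in> cball y0 \<delta> \<Longrightarrow> infdist z C \<le> infdist zm C"
    using continuous_attains_sup[OF compact_cball _ contd, of y0 \<delta>] d0 by auto
  have izm: "T + \<delta> \<le> infdist zm C"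
  proof (rule ccontr)
    assume "\<not> T + \<delta> \<le> infdist zm C"
    then have lt: "infdist zm C < T + \<delta>" by simp
    define \<epsilon> where "\<epsilon> = min (1/2) ((T + \<delta> - infdist zm C) / (2 * \<delta>))"
    have e0: "0 < \<epsilon>" "\<epsilon> < 1" using lt d0 by (auto simp: \<epsilon>_def)
    obtain z where "z \<in> cball y0 \<delta>" "T + (1 - \<epsilon>) * \<delta> \<le> infdist z C" using claim[OF e0] by blast
    then have "T + (1 - \<epsilon>) * \<delta> \<le> infdist zm C" using zmmax by force
    moreover have "\<epsilon> * \<delta> \<le> (T + \<delta> - infdist zm C) / 2"
    proof -
      have "\<epsilon> \<le> (T + \<delta> - infdist zm C) / (2 * \<delta>)" by (simp add: \<epsilon>_def)
      then have "\<epsilon> * (2 * \<delta>) \<le> (T + \<delta> - infdist zm C)" using d0 by (simp add: pos_le_divide_eq)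
      then show ?thesis by simp
    qed
    ultimately show False using lt by (simp add: algebra_simps)
  qed
  have pzm: "infdist zm C \<le> norm (zm - p)" using infdist_le_norm[OF pC] .
  have "norm (zm - p) \<le> norm (zm - y0) + norm (y0 - p)" using norm_triangle_ineq[of "zm - y0" "y0 - p"] by simp
  moreover have "norm (zm - y0) \<le> \<delta>" using zm by (simp add: dist_norm norm_minus_commute)
  moreover have ny0: "norm (y0 - p) = T" using nz T0 by (simp add: y0_def)
  ultimately have e1: "norm (zm - y0) = \<delta>" and e2: "norm (zm - p) = T + \<delta>" using izm pzm by linarith+
  have "norm ((zm - y0) + (y0 - p)) = norm (zm - y0) + norm (y0 - p)" using e1 e2 ny0 by simp
  then have "norm (zm - y0) *\<^sub>R (y0 - p) = norm (y0 - p) *\<^sub>R (zm - y0)" by (rule norm_triangle_eq[THEN iffD1])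
  then have "\<delta> *\<^sub>R (T *\<^sub>R \<zeta>) = T *\<^sub>R (zm - y0)" using e1 ny0 by (simp add: y0_def)
  then have "zm - y0 = \<delta> *\<^sub>R \<zeta>" using T0 by (metis (no_types, lifting) scaleR_left_commute scaleR_cancel_left less_irrefl)
  then have zmeq: "zm = p + (T + \<delta>) *\<^sub>R \<zeta>" by (simp add: y0_def algebra_simps)
  show ?thesis unfolding proj_iff_infdist using pC e2 izm by (simp add: zmeq[symmetric])
qed

lemma reach_far:
  fixes C :: "'a::euclidean_space set"
  assumes cl: "closed C" and uqU: "\<And>x. x \<in> U \<Longrightarrow> \<exists>!p. p \<in> proj C x"
    and pT: "p \<in> proj C (p + T *\<^sub>R \<zeta>)" and nz: "norm \<zeta> = 1" and T0: "T > 0"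
    and R0: "R > 0" and sub: "cball p (2 * R) \<subseteq> U"
  shows "p \<in> proj C (p + R *\<^sub>R \<zeta>)"
proof -
  define A where "A = {t \<in> {0..R}. p \<in> proj C (p + t *\<^sub>R \<zeta>)}"
  have pC: "p \<in> C" using pT by (simp add: proj_def)
  have A_eq: "A = {0..R} \<inter> {t. norm ((p + t *\<^sub>R \<zeta>) - p) \<le> infdist (p + t *\<^sub>R \<zeta>) C}"
    unfolding A_def proj_iff_infdist using pC by auto
  have Acl: "closed A" unfolding A_eq
    by (intro closed_Int closed_atLeastAtMost closed_Collect_le continuous_intros)
  have mA: "min T R \<in> A" unfolding A_def using proj_ray_shrink[OF pT, of "min T R"] T0 R0 by auto
  have Abd: "bdd_above A" by (auto simp: A_def bdd_above_def)
  define S where "S = Sup A"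
  have SA: "S \<in> A" unfolding S_def using closed_contains_Sup[OF _ Abd Acl] mA by auto
  have SR: "S \<le> R" and Spos: "S \<ge> min T R" using SA cSup_upper[OF mA Abd] by (auto simp: A_def S_def)
  show ?thesis
  proof (cases "S = R")
    case True then show ?thesis using SA by (simp add: A_def)
  next
    case False
    then have SR': "S < R" using SR by simp
    have S0: "S > 0" using Spos T0 R0 by simp
    define \<delta> where "\<delta> = min (S/2) (R - S)"
    have d0: "0 < \<delta>" "\<delta> < S" using S0 SR' by (auto simp: \<delta>_def)
    have "cball (p + S *\<^sub>R \<zeta>) \<delta> \<subseteq> U"
    proof
      fix x assume "x \<in> cball (p + S *\<^sub>R \<zeta>) \<delta>"
      then have "norm (x - (p + S *\<^sub>R \<zeta>)) \<le> \<delta>" by (simp add: dist_norm norm_minus_commute)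
      moreover have "norm (x - p) \<le> norm (x - (p + S *\<^sub>R \<zeta>)) + norm (S *\<^sub>R \<zeta>)"
        using norm_triangle_ineq[of "x - (p + S *\<^sub>R \<zeta>)" "S *\<^sub>R \<zeta>"] by simp
      moreover have "norm (S *\<^sub>R \<zeta>) = S" using nz S0 by simp
      ultimately have "norm (x - p) \<le> 2 * R" using d0 \<delta>_def SR' by linarith
      then show "x \<in> U" using sub by (auto simp: dist_norm norm_minus_commute)
    qed
    then have "p \<in> proj C (p + (S + \<delta>) *\<^sub>R \<zeta>)"
      using reach_step[OF cl uqU, where p=p and T=S and \<zeta>=\<zeta> and \<delta>=\<delta>] SA nz S0 d0 by (auto simp: A_def)
    then have hA: "S + \<delta> \<in> A" using S0 d0 \<delta>_def by (auto simp: A_def)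
    have "S + \<delta> \<le> Sup A" by (rule cSup_upper[OF hA Abd])
    then have "S + \<delta> \<le> S" by (simp add: S_def)
    then show ?thesis using d0 by simp
  qed
qed

lemma prox_ineq:
  fixes C :: "'a::euclidean_space set"
  assumes "p \<in> proj C (p + R *\<^sub>R \<zeta>)" "norm \<zeta> = 1" "R > 0" "c \<in> C"
  shows "2 * R * inner \<zeta> (c - p) \<le> (norm (c - p))\<^sup>2"
proof -
  have "norm (R *\<^sub>R \<zeta>) \<le> norm (p + R *\<^sub>R \<zeta> - c)" using assms by (simp add: proj_def)
  also have "p + R *\<^sub>R \<zeta> - c = R *\<^sub>R \<zeta> - (c - p)" by (simp add: algebra_simps)
  finally have h1: "R \<le> norm (R *\<^sub>R \<zeta> - (c - p))" using assms by simp
  have h2: "R\<^sup>2 \<le> (norm (R *\<^sub>R \<zeta> - (c - p)))\<^sup>2" using h1 assms by (intro power_mono) auto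
  have h3: "(norm (R *\<^sub>R \<zeta> - (c - p)))\<^sup>2 = R\<^sup>2 - 2 * R * inner \<zeta> (c - p) + (norm (c - p))\<^sup>2"
    using norm_diff_sq[of "R *\<^sub>R \<zeta>" "c - p"] assms by simp
  show ?thesis using h2 h3 by linarith
qed

definition fnormal :: "'a::euclidean_space set \<Rightarrow> 'a \<Rightarrow> 'a \<Rightarrow> bool" where
  "fnormal C x n \<longleftrightarrow> (\<forall>e>0. \<exists>\<delta>>0. \<forall>c\<in>C. norm (c - x) < \<delta> \<longrightarrow> inner n (c - x) \<le> e * norm (c - x))"

lemma unit_diff:
  fixes w \<zeta> :: "'a::real_normed_vector"
  assumes "w \<noteq> 0" "t > 0" "norm \<zeta> = 1"
  shows "norm ((1 / norm w) *\<^sub>R w - \<zeta>) \<le> 2 * norm (w - t *\<^sub>R \<zeta>) / t"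
proof -
  have eq: "(1 / norm w) *\<^sub>R w - \<zeta> = (1 / norm w - 1 / t) *\<^sub>R w + (1 / t) *\<^sub>R (w - t *\<^sub>R \<zeta>)"
    using assms by (simp add: algebra_simps)
  have "norm ((1 / norm w) *\<^sub>R w - \<zeta>) \<le> norm ((1 / norm w - 1 / t) *\<^sub>R w) + norm ((1 / t) *\<^sub>R (w - t *\<^sub>R \<zeta>))"
    unfolding eq by (rule norm_triangle_ineq)
  also have "norm ((1 / norm w - 1 / t) *\<^sub>R w) = \<bar>t - norm w\<bar> / t"
  proof -
    have "norm ((1 / norm w - 1 / t) *\<^sub>R w) = \<bar>1 / norm w - 1 / t\<bar> * norm w" by simp
    also have "\<dots> = \<bar>(1 / norm w - 1 / t) * norm w\<bar>" by (simp add: abs_mult)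
    also have "(1 / norm w - 1 / t) * norm w = (t - norm w) / t" using assms by (simp add: field_simps)
    finally show ?thesis using assms by simp
  qed
  also have "norm ((1 / t) *\<^sub>R (w - t *\<^sub>R \<zeta>)) = norm (w - t *\<^sub>R \<zeta>) / t" using assms by simp
  also have "\<bar>t - norm w\<bar> \<le> norm (w - t *\<^sub>R \<zeta>)"
    using norm_triangle_ineq3[of "t *\<^sub>R \<zeta>" w] assms by (simp add: norm_minus_commute)
  then have "\<bar>t - norm w\<bar> / t \<le> norm (w - t *\<^sub>R \<zeta>) / t" using assms by (simp add: divide_right_mono)
  finally show ?thesis by simp
qed

lemma fnormal_prox:
  fixes C :: "'a::euclidean_space set"
  assumes cl: "closed C" and uqU: "\<And>x. x \<in> U \<Longrightarrow> \<exists>!p. p \<in> proj C x"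
    and xC: "x \<in> C" and sub: "cball x (3 * R) \<subseteq> U" and R0: "R > 0" and nz: "n \<noteq> 0"
    and fn: "fnormal C x n"
  shows "x \<in> proj C (x + R *\<^sub>R ((1 / norm n) *\<^sub>R n))"
proof -
  define \<zeta> where "\<zeta> = (1 / norm n) *\<^sub>R n"
  have z1: "norm \<zeta> = 1" using nz by (simp add: \<zeta>_def)
  have CnE: "C \<noteq> {}" using xC by auto
  have fz: "\<exists>\<delta>>0. \<forall>c\<in>C. norm (c - x) < \<delta> \<longrightarrow> inner \<zeta> (c - x) \<le> e * norm (c - x)" if "e > 0" for e
  proof -
    have "e * norm n > 0" using that nz by simp
    then obtain \<delta> where "\<delta> > 0" and d: "\<And>c. c \<in> C \<Longrightarrow> norm (c - x) < \<delta> \<Longrightarrow> inner n (c - x) \<le> (e * norm n) * norm (c - x)"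
      using fn unfolding fnormal_def by blast
    show ?thesis
    proof (intro exI[of _ \<delta>] conjI ballI impI)
      fix c assume "c \<in> C" "norm (c - x) < \<delta>"
      then have "inner n (c - x) / norm n \<le> e * norm (c - x)" using d nz by (simp add: divide_le_eq mult_ac)
      then show "inner \<zeta> (c - x) \<le> e * norm (c - x)" by (simp add: \<zeta>_def)
    qed fact
  qed
  have main: "R - 5 * R * e \<le> norm (x + R *\<^sub>R \<zeta> - c)" if cC: "c \<in> C" and e0: "0 < e" and e1: "e < 1/4" for c e
  proof -
    obtain \<delta>' where d'0: "\<delta>' > 0" and d': "\<And>c. c \<in> C \<Longrightarrow> norm (c - x) < \<delta>' \<Longrightarrow> inner \<zeta> (c - x) \<le> e * norm (c - x)"
      using fz[OF e0] by blast
    define t where "t = min (R/2) (\<delta>'/3)"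
    have t0: "t > 0" "t \<le> R/2" "3 * t \<le> \<delta>'" using R0 d'0 by (auto simp: t_def)
    define y where "y = x + t *\<^sub>R \<zeta>"
    obtain p where p: "p \<in> proj C y" using proj_exists[OF cl CnE] by blast
    have pC: "p \<in> C" using p by (simp add: proj_def)
    define a where "a = p - x"
    have yp: "norm (y - p) \<le> t" using p xC z1 t0 by (auto simp: proj_def y_def)
    have na: "norm a \<le> 2 * t"
    proof -
      have "a = (y - x) - (y - p)" by (simp add: a_def)
      then have "norm a \<le> norm (y - x) + norm (y - p)" by (metis norm_triangle_ineq4)
      then show ?thesis using yp z1 t0 by (simp add: y_def)
    qed
    have za: "inner \<zeta> a \<le> e * norm a" using d'[OF pC] na t0 by (simp add: a_def)
    have "(norm (t *\<^sub>R \<zeta> - a))\<^sup>2 \<le> t\<^sup>2"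
    proof -
      have "t *\<^sub>R \<zeta> - a = y - p" by (simp add: y_def a_def)
      then show ?thesis using yp by (simp add: power_mono)
    qed
    then have "(norm a)\<^sup>2 \<le> 2 * t * inner \<zeta> a"
      using norm_diff_sq[of "t *\<^sub>R \<zeta>" a] z1 by simp
    also have "\<dots> \<le> 2 * t * (e * norm a)" using za t0 by simp
    finally have "norm a * norm a \<le> (2 * t * e) * norm a" by (simp add: power2_eq_square mult_ac)
    then have na2: "norm a \<le> 2 * t * e"
      using t0 e0 by (cases "norm a = 0") (auto simp: mult_le_cancel_right)
    define w where "w = y - p"
    have wa: "w = t *\<^sub>R \<zeta> - a" by (simp add: w_def y_def a_def)
    have nw: "norm w \<ge> t - norm a" using norm_triangle_ineq2[of "t *\<^sub>R \<zeta>" a] z1 t0 wa by simp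
    have tpos: "t - 2 * t * e > 0" using t0 e1 by (simp add: algebra_simps)
    have w0: "w \<noteq> 0" using nw na2 tpos by auto
    define \<nu> where "\<nu> = (1 / norm w) *\<^sub>R w"
    have nu1: "norm \<nu> = 1" using w0 by (simp add: \<nu>_def)
    have "p + norm w *\<^sub>R \<nu> = y" using w0 by (simp add: \<nu>_def w_def)
    then have pw: "p \<in> proj C (p + norm w *\<^sub>R \<nu>)" using p by simp
    have "cball p (2 * R) \<subseteq> U"
    proof -
      have "norm (p - x) \<le> R" using na t0 by (simp add: a_def)
      have "cball p (2 * R) \<subseteq> cball x (3 * R)"
      proof
        fix z assume "z \<in> cball p (2 * R)"
        then have "norm (p - z) \<le> 2 * R" by (simp add: dist_norm)
        moreover have "norm (x - z) \<le> norm (x - p) + norm (p - z)" by (rule norm_diff_triangle_ineq[of x p p z, simplified])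
        moreover have "norm (x - p) \<le> R" using \<open>norm (p - x) \<le> R\<close> by (simp add: norm_minus_commute)
        ultimately show "z \<in> cball x (3 * R)" by (simp add: dist_norm)
      qed
      then show ?thesis using sub by blast
    qed
    then have pR: "p \<in> proj C (p + R *\<^sub>R \<nu>)"
      using reach_far[OF cl uqU pw nu1 _ R0] w0 by simp
    then have "norm (R *\<^sub>R \<nu>) \<le> norm (p + R *\<^sub>R \<nu> - c)" using cC by (simp add: proj_def)
    then have Rle: "R \<le> norm (p + R *\<^sub>R \<nu> - c)" using nu1 R0 by simp
    have "p + R *\<^sub>R \<nu> - c = (x + R *\<^sub>R \<zeta> - c) + a + R *\<^sub>R (\<nu> - \<zeta>)" by (simp add: a_def algebra_simps)
    then have "norm (p + R *\<^sub>R \<nu> - c) \<le> norm (x + R *\<^sub>R \<zeta> - c) + norm a + norm (R *\<^sub>R (\<nu> - \<zeta>))"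
      by (metis norm_triangle_ineq add_right_mono order_trans)
    then have "norm (p + R *\<^sub>R \<nu> - c) \<le> norm (x + R *\<^sub>R \<zeta> - c) + norm a + R * norm (\<nu> - \<zeta>)"
      using R0 by simp
    moreover have "norm (\<nu> - \<zeta>) \<le> 4 * e"
    proof -
      have "norm (\<nu> - \<zeta>) \<le> 2 * norm (w - t *\<^sub>R \<zeta>) / t" unfolding \<nu>_def by (rule unit_diff[OF w0 t0(1) z1])
      also have "norm (w - t *\<^sub>R \<zeta>) = norm a" by (simp add: wa)
      also have "2 * norm a / t \<le> 4 * e" using na2 t0 by (simp add: divide_le_eq mult_ac)
      finally show ?thesis .
    qed
    moreover have "2 * t * e \<le> R * e" using t0 e0 by simp
    ultimately have "R * norm (\<nu> - \<zeta>) \<le> R * (4 * e)" using R0 by (intro mult_left_mono) auto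
    then show ?thesis using Rle na2 \<open>2 * t * e \<le> R * e\<close> \<open>norm (p + R *\<^sub>R \<nu> - c) \<le> norm (x + R *\<^sub>R \<zeta> - c) + norm a + R * norm (\<nu> - \<zeta>)\<close>
      by (simp add: algebra_simps)
  qed
  have "R \<le> norm (x + R *\<^sub>R \<zeta> - c)" if cC: "c \<in> C" for c
  proof (rule ccontr)
    assume "\<not> ?thesis"
    then have lt: "norm (x + R *\<^sub>R \<zeta> - c) < R" by simp
    define e where "e = min (1/8) ((R - norm (x + R *\<^sub>R \<zeta> - c)) / (10 * R))"
    have e0: "0 < e" "e < 1/4" using lt R0 by (auto simp: e_def)
    have "e \<le> (R - norm (x + R *\<^sub>R \<zeta> - c)) / (10 * R)" by (simp add: e_def)
    then have "e * (10 * R) \<le> R - norm (x + R *\<^sub>R \<zeta> - c)" using R0 by (simp add: pos_le_divide_eq)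
    moreover have "R - 5 * R * e \<le> norm (x + R *\<^sub>R \<zeta> - c)" using main[OF cC e0] .
    moreover have "0 < R * e" using e0 R0 by simp
    ultimately show False by (simp add: algebra_simps)
  qed
  then show ?thesis using xC z1 R0 by (auto simp: proj_def \<zeta>_def[symmetric])
qed

lemma tangent_of_polar:
  fixes C :: "'a::euclidean_space set"
  assumes cl: "closed C" and uqU: "\<And>x. x \<in> U \<Longrightarrow> \<exists>!p. p \<in> proj C x"
    and xC: "x \<in> C" and sub: "cball x (3 * R) \<subseteq> U" and R0: "R > 0"
    and pol: "\<And>n. fnormal C x n \<Longrightarrow> inner n d \<le> 0" and e0: "e > 0" and t00: "t0 > 0"
  shows "\<exists>t c. 0 < t \<and> t \<le> t0 \<and> c \<in> C \<and> norm (c - (x + t *\<^sub>R d)) \<le> e * t"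
proof (rule ccontr)
  assume "\<not> ?thesis"
  then have H: "\<And>t c. 0 < t \<Longrightarrow> t \<le> t0 \<Longrightarrow> c \<in> C \<Longrightarrow> e * t < norm (c - (x + t *\<^sub>R d))"
    by (meson not_le)
  have CnE: "C \<noteq> {}" using xC by auto
  have dnz: "d \<noteq> 0"
  proof
    assume d0: "d = 0"
    have "e * t0 < norm (x - (x + t0 *\<^sub>R d))" by (rule H[OF t00 order_refl xC])
    then show False using d0 mult_pos_pos[OF e0 t00] by simp
  qed
  define \<tau> where "\<tau> = min t0 (R / (2 * norm d))"
  have tau0: "\<tau> > 0" "\<tau> \<le> t0" "2 * \<tau> * norm d \<le> R"
    using t00 R0 dnz by (auto simp: \<tau>_def field_simps min_def)
  define t where "t k = \<tau> / real (Suc k)" for k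
  have tpos: "t k > 0" "t k \<le> \<tau>" for k using tau0 by (auto simp: t_def divide_le_eq)
  have tlim: "t \<longlonglongrightarrow> 0"
    unfolding t_def using tendsto_mult[OF tendsto_const[of \<tau>] LIMSEQ_inverse_real_of_nat]
    by (simp add: divide_inverse)
  have "\<forall>k. \<exists>p. p \<in> proj C (x + t k *\<^sub>R d)" using proj_exists[OF cl CnE] by metis
  then obtain P where P: "\<And>k. P k \<in> proj C (x + t k *\<^sub>R d)" by metis
  define w where "w k = x + t k *\<^sub>R d - P k" for k
  define \<nu> where "\<nu> k = (1 / norm (w k)) *\<^sub>R w k" for k
  have PC: "P k \<in> C" for k using P by (simp add: proj_def)
  have wbig: "e * t k < norm (w k)" for k
    using H[OF tpos(1) _ PC, of k] tpos(2)[of k] tau0 by (simp add: w_def norm_minus_commute)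
  have wsmall: "norm (w k) \<le> t k * norm d" for k
    using P[of k] xC tpos[of k] by (auto simp: proj_def w_def)
  have w0: "w k \<noteq> 0" for k using wbig[of k] mult_pos_pos[OF e0 tpos(1)[of k]] by auto
  have nu1: "norm (\<nu> k) = 1" for k using w0 by (simp add: \<nu>_def)
  have Px: "norm (P k - x) \<le> 2 * t k * norm d" for k
  proof -
    have "P k - x = t k *\<^sub>R d - w k" by (simp add: w_def)
    then have "norm (P k - x) \<le> norm (t k *\<^sub>R d) + norm (w k)" by (metis norm_triangle_ineq4)
    then show ?thesis using wsmall[of k] tpos[of k] by simp
  qed
  have proxk: "2 * R * inner (\<nu> k) (c - P k) \<le> (norm (c - P k))\<^sup>2" if cC: "c \<in> C" for k c
  proof -
    have "P k + norm (w k) *\<^sub>R \<nu> k = x + t k *\<^sub>R d" using w0[of k] by (simp add: \<nu>_def w_def)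
    then have pw: "P k \<in> proj C (P k + norm (w k) *\<^sub>R \<nu> k)" using P[of k] by simp
    have "cball (P k) (2 * R) \<subseteq> U"
    proof -
      have "norm (P k - x) \<le> R" using Px[of k] tpos[of k] tau0 dnz
        by (smt (verit) mult_right_mono norm_ge_zero)
      have "cball (P k) (2 * R) \<subseteq> cball x (3 * R)"
      proof
        fix z assume "z \<in> cball (P k) (2 * R)"
        then have "norm (P k - z) \<le> 2 * R" by (simp add: dist_norm)
        moreover have "norm (x - z) \<le> norm (x - P k) + norm (P k - z)" by (rule norm_diff_triangle_ineq[of x "P k" "P k" z, simplified])
        moreover have "norm (x - P k) \<le> R" using \<open>norm (P k - x) \<le> R\<close> by (simp add: norm_minus_commute)
        ultimately show "z \<in> cball x (3 * R)" by (simp add: dist_norm)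
      qed
      then show ?thesis using sub by blast
    qed
    then have "P k \<in> proj C (P k + R *\<^sub>R \<nu> k)"
      using reach_far[OF cl uqU pw nu1 _ R0] w0[of k] by simp
    then show ?thesis using prox_ineq[OF _ nu1 R0 cC] by blast
  qed
  have nud: "e - 2 * t k * (norm d)\<^sup>2 / R \<le> inner (\<nu> k) d" for k
  proof -
    have "2 * R * inner (\<nu> k) (x - P k) \<le> (norm (x - P k))\<^sup>2" using proxk[OF xC] .
    moreover have "x - P k = w k - t k *\<^sub>R d" by (simp add: w_def)
    moreover have "inner (\<nu> k) (w k) = norm (w k)"
      using w0[of k] by (simp add: \<nu>_def power2_norm_eq_inner[symmetric] power2_eq_square)
    ultimately have "2 * R * (norm (w k) - t k * inner (\<nu> k) d) \<le> (norm (P k - x))\<^sup>2"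
      by (simp add: inner_diff_right norm_minus_commute)
    also have "\<dots> \<le> (2 * t k * norm d)\<^sup>2" using Px[of k] by (simp add: power_mono)
    finally have "2 * R * (norm (w k) - t k * inner (\<nu> k) d) \<le> 4 * (t k)\<^sup>2 * (norm d)\<^sup>2"
      by (simp add: power_mult_distrib)
    then have "2 * R * (e * t k - t k * inner (\<nu> k) d) \<le> 4 * (t k)\<^sup>2 * (norm d)\<^sup>2"
      using wbig[of k] R0 by (smt (verit) mult_left_mono)
    then have "t k * (2 * R * (e - inner (\<nu> k) d)) \<le> t k * (4 * t k * (norm d)\<^sup>2)"
      by (simp add: algebra_simps power2_eq_square)
    then have "2 * R * (e - inner (\<nu> k) d) \<le> 4 * t k * (norm d)\<^sup>2"
      using tpos[of k] by simp
    then have A: "(e - inner (\<nu> k) d) * (2 * R) \<le> 4 * t k * (norm d)\<^sup>2" by (metis mult.commute)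
    have B: "0 < 2 * R" using R0 by simp
    have "e - inner (\<nu> k) d \<le> 4 * t k * (norm d)\<^sup>2 / (2 * R)"
      using pos_le_divide_eq[OF B, THEN iffD2, OF A] .
    also have "4 * t k * (norm d)\<^sup>2 / (2 * R) = 2 * t k * (norm d)\<^sup>2 / R" by simp
    finally show ?thesis by simp
  qed
  have "seq_compact (sphere (0::'a) 1)" by (rule compact_imp_seq_compact) simp
  moreover have "\<forall>k. \<nu> k \<in> sphere 0 1" using nu1 by simp
  ultimately obtain l r where lS: "l \<in> sphere 0 1" and r: "strict_mono r" and lim: "(\<nu> \<circ> r) \<longlonglongrightarrow> l"
    by (rule seq_compactE)
  have tr: "(t \<circ> r) \<longlonglongrightarrow> 0" using LIMSEQ_subseq_LIMSEQ[OF tlim r] .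
  have t2: "(\<lambda>k. 2 * (t \<circ> r) k * c) \<longlonglongrightarrow> 0" for c :: real
    using tendsto_mult_right[OF tendsto_mult_left[OF tr, of 2], of c] by simp
  have Pr: "(P \<circ> r) \<longlonglongrightarrow> x"
  proof -
    have ev: "eventually (\<lambda>k. norm ((P \<circ> r) k - x) \<le> 2 * (t \<circ> r) k * norm d) sequentially"
      by (intro always_eventually allI) (simp add: Px)
    have "(\<lambda>k. (P \<circ> r) k - x) \<longlonglongrightarrow> 0" by (rule Lim_null_comparison[OF ev t2])
    then show ?thesis by (simp add: LIM_zero_iff comp_def)
  qed
  have "e \<le> inner l d"
  proof -
    have L1: "(\<lambda>k. e - 2 * (t \<circ> r) k * (norm d)\<^sup>2 / R) \<longlonglongrightarrow> e"
      using tendsto_diff[OF tendsto_const[of e] tendsto_divide[OF t2[of "(norm d)\<^sup>2"] tendsto_const[of R]]] R0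
      by simp
    have L2: "(\<lambda>k. inner ((\<nu> \<circ> r) k) d) \<longlonglongrightarrow> inner l d" by (rule tendsto_inner[OF lim tendsto_const])
    have "\<exists>N. \<forall>n\<ge>N. e - 2 * (t \<circ> r) n * (norm d)\<^sup>2 / R \<le> inner ((\<nu> \<circ> r) n) d"
      using nud by (intro exI[of _ 0] allI impI) simp
    then show ?thesis by (rule LIMSEQ_le[OF L1 L2])
  qed
  moreover have "fnormal C x l"
  proof -
    have lim_ineq: "2 * R * inner l (c - x) \<le> (norm (c - x))\<^sup>2" if cC: "c \<in> C" for c
    proof (rule LIMSEQ_le)
      show "(\<lambda>k. 2 * R * inner ((\<nu> \<circ> r) k) (c - (P \<circ> r) k)) \<longlonglongrightarrow> 2 * R * inner l (c - x)"
        by (rule tendsto_mult_left[OF tendsto_inner[OF lim tendsto_diff[OF tendsto_const Pr]]])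
      show "(\<lambda>k. (norm (c - (P \<circ> r) k))\<^sup>2) \<longlonglongrightarrow> (norm (c - x))\<^sup>2"
        by (rule tendsto_power[OF tendsto_norm[OF tendsto_diff[OF tendsto_const Pr]]])
      show "\<exists>N. \<forall>n\<ge>N. 2 * R * inner ((\<nu> \<circ> r) n) (c - (P \<circ> r) n) \<le> (norm (c - (P \<circ> r) n))\<^sup>2"
        using proxk[OF cC] by (intro exI[of _ 0] allI impI) simp
    qed
    show ?thesis unfolding fnormal_def
    proof (intro allI impI)
      fix e' :: real assume e': "e' > 0"
      show "\<exists>\<delta>>0. \<forall>c\<in>C. norm (c - x) < \<delta> \<longrightarrow> inner l (c - x) \<le> e' * norm (c - x)"
      proof (intro exI[of _ "2 * R * e'"] conjI ballI impI)
        show "0 < 2 * R * e'" using R0 e' by simp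
        fix c assume cC: "c \<in> C" and cl': "norm (c - x) < 2 * R * e'"
        have "2 * R * inner l (c - x) \<le> norm (c - x) * norm (c - x)"
          using lim_ineq[OF cC] by (simp add: power2_eq_square)
        also have "\<dots> \<le> (2 * R * e') * norm (c - x)" using cl' by (simp add: mult_right_mono)
        finally have "2 * R * inner l (c - x) \<le> 2 * R * (e' * norm (c - x))" by (simp add: mult_ac)
        then show "inner l (c - x) \<le> e' * norm (c - x)" using R0 by simp
      qed
    qed
  qed
  then have "inner l d \<le> 0" by (rule pol)
  ultimately show False using e0 by simp
qed

lemma fnormal_add: "fnormal C x n \<Longrightarrow> fnormal C x m \<Longrightarrow> fnormal C x (n + m)"
  unfolding fnormal_def
proof (intro allI impI)
  fix e :: real assume e: "e > 0"
  assume A: "\<forall>e>0. \<exists>\<delta>>0. \<forall>c\<in>C. norm (c - x) < \<delta> \<longrightarrow> inner n (c - x) \<le> e * norm (c - x)"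
     and B: "\<forall>e>0. \<exists>\<delta>>0. \<forall>c\<in>C. norm (c - x) < \<delta> \<longrightarrow> inner m (c - x) \<le> e * norm (c - x)"
  obtain d1 where d1: "d1 > 0" "\<forall>c\<in>C. norm (c - x) < d1 \<longrightarrow> inner n (c - x) \<le> (e/2) * norm (c - x)"
    using A e by (meson half_gt_zero)
  obtain d2 where d2: "d2 > 0" "\<forall>c\<in>C. norm (c - x) < d2 \<longrightarrow> inner m (c - x) \<le> (e/2) * norm (c - x)"
    using B e by (meson half_gt_zero)
  show "\<exists>\<delta>>0. \<forall>c\<in>C. norm (c - x) < \<delta> \<longrightarrow> inner (n + m) (c - x) \<le> e * norm (c - x)"
  proof (intro exI[of _ "min d1 d2"] conjI ballI impI)
    fix c assume "c \<in> C" "norm (c - x) < min d1 d2"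
    then have "inner n (c - x) \<le> (e/2) * norm (c - x)" "inner m (c - x) \<le> (e/2) * norm (c - x)"
      using d1 d2 by auto
    then show "inner (n + m) (c - x) \<le> e * norm (c - x)" by (simp add: inner_add_left)
  qed (use d1 d2 in simp)
qed

lemma fnormal_scale: "fnormal C x n \<Longrightarrow> 0 \<le> a \<Longrightarrow> fnormal C x (a *\<^sub>R n)"
  unfolding fnormal_def
proof (intro allI impI)
  fix e :: real assume e: "e > 0" and a: "0 \<le> a"
  assume A: "\<forall>e>0. \<exists>\<delta>>0. \<forall>c\<in>C. norm (c - x) < \<delta> \<longrightarrow> inner n (c - x) \<le> e * norm (c - x)"
  have "e / (a + 1) > 0" using e a by simp
  then obtain d1 where d1: "d1 > 0" "\<forall>c\<in>C. norm (c - x) < d1 \<longrightarrow> inner n (c - x) \<le> (e / (a + 1)) * norm (c - x)"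
    using A by blast
  show "\<exists>\<delta>>0. \<forall>c\<in>C. norm (c - x) < \<delta> \<longrightarrow> inner (a *\<^sub>R n) (c - x) \<le> e * norm (c - x)"
  proof (intro exI[of _ d1] conjI ballI impI)
    fix c assume "c \<in> C" "norm (c - x) < d1"
    then have i: "inner n (c - x) \<le> (e / (a + 1)) * norm (c - x)" using d1 by auto
    have "inner (a *\<^sub>R n) (c - x) = a * inner n (c - x)" by simp
    also have "\<dots> \<le> a * ((e / (a + 1)) * norm (c - x))" by (rule mult_left_mono[OF i a])
    also have "\<dots> \<le> e * norm (c - x)"
    proof -
      have "a * (e / (a + 1)) \<le> e" using a e by (simp add: field_simps)
      then show ?thesis by (metis mult.assoc mult_right_mono norm_ge_zero)
    qed
    finally show "inner (a *\<^sub>R n) (c - x) \<le> e * norm (c - x)" .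
  qed (use d1 in simp)
qed

lemma fnormal_zero: "fnormal C x 0"
  unfolding fnormal_def by (auto intro: exI[of _ 1])

lemma fnormal_closed: "closed {n. fnormal C x n}"
proof -
  have "n \<in> {n. fnormal C x n}" if H: "\<forall>\<epsilon>>0. \<exists>y\<in>{n. fnormal C x n}. dist y n < \<epsilon>" for n
  proof -
    have "fnormal C x n" unfolding fnormal_def
    proof (intro allI impI)
      fix e :: real assume e: "e > 0"
      obtain m where m: "fnormal C x m" "dist m n < e/2" using H e by (meson half_gt_zero mem_Collect_eq)
      obtain d1 where d1: "d1 > 0" "\<forall>c\<in>C. norm (c - x) < d1 \<longrightarrow> inner m (c - x) \<le> (e/2) * norm (c - x)"
        using m(1) e unfolding fnormal_def by (meson half_gt_zero)
      show "\<exists>\<delta>>0. \<forall>c\<in>C. norm (c - x) < \<delta> \<longrightarrow> inner n (c - x) \<le> e * norm (c - x)"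
      proof (intro exI[of _ d1] conjI ballI impI)
        fix c assume "c \<in> C" "norm (c - x) < d1"
        then have i: "inner m (c - x) \<le> (e/2) * norm (c - x)" using d1 by auto
        have "inner (n - m) (c - x) \<le> norm (n - m) * norm (c - x)" by (rule norm_cauchy_schwarz)
        also have "\<dots> \<le> (e/2) * norm (c - x)"
        proof (rule mult_right_mono)
          show "norm (n - m) \<le> e/2" using m(2) by (simp add: dist_norm norm_minus_commute)
        qed simp
        finally show "inner n (c - x) \<le> e * norm (c - x)" using i by (simp add: inner_diff_left)
      qed (use d1 in simp)
    qed
    then show ?thesis by simp
  qed
  then show ?thesis by (metis closure_approachable closure_subset_eq subsetI)
qed

lemma fnormal_convex: "convex {n. fnormal C x n}"
proof (rule convexI)
  fix a b u v assume "a \<in> {n. fnormal C x n}" "b \<in> {n. fnormal C x n}" "0 \<le> (u::real)" "0 \<le> (v::real)"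
  then show "u *\<^sub>R a + v *\<^sub>R b \<in> {n. fnormal C x n}" by (simp add: fnormal_add fnormal_scale)
qed

lemma bipolar:
  fixes C :: "'a::euclidean_space set"
  assumes pol: "\<And>d. (\<And>n. fnormal C x n \<Longrightarrow> inner n d \<le> 0) \<Longrightarrow> inner m d \<le> 0"
  shows "fnormal C x m"
proof (rule ccontr)
  assume nm: "\<not> fnormal C x m"
  obtain a b where ab: "inner a m < b" "\<forall>n\<in>{n. fnormal C x n}. inner a n > b"
    using separating_hyperplane_closed_point[OF fnormal_convex fnormal_closed, of m C x] nm by auto
  have b0: "b < 0" using ab(2) fnormal_zero[of C x] by auto
  have an: "inner a n \<ge> 0" if n: "fnormal C x n" for n
  proof (rule ccontr)
    assume "\<not> inner a n \<ge> 0"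
    then have neg: "inner a n < 0" by simp
    define lam where "lam = b / inner a n"
    have l0: "lam \<ge> 0" using neg b0 by (simp add: lam_def zero_le_divide_iff)
    have "inner a (lam *\<^sub>R n) > b" using ab(2) fnormal_scale[OF n l0] by auto
    moreover have "inner a (lam *\<^sub>R n) = b" using neg by (simp add: lam_def)
    ultimately show False by simp
  qed
  have "inner m (- a) \<le> 0"
    by (rule pol) (use an in \<open>simp add: inner_commute\<close>)
  then show False using ab(1) b0 by (simp add: inner_commute)
qed

lemma eps_le:
  fixes u b c :: real
  assumes "c \<ge> 0" "\<And>\<epsilon>. \<epsilon> > 0 \<Longrightarrow> u \<le> b + c * \<epsilon>"
  shows "u \<le> b"
proof (rule field_le_epsilon)
  fix e :: real assume e: "e > 0"
  have "u \<le> b + c * (e / (c + 1))" using assms(2)[of "e / (c + 1)"] e assms(1) by simp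
  also have "c * (e / (c + 1)) \<le> e" using assms(1) e by (simp add: field_simps)
  finally show "u \<le> b + e" by simp
qed

lemma convex_min_sep:
  fixes h :: "'a::euclidean_space \<Rightarrow> real"
  assumes hc: "convex_on UNIV h" and Tc: "convex T" and T0: "0 \<in> T"
    and mn: "\<And>d. d \<in> T \<Longrightarrow> h x \<le> h (x + d)"
  shows "\<exists>k. (\<forall>y. h x + inner k (y - x) \<le> h y) \<and> (\<forall>d\<in>T. 0 \<le> inner k d)"
proof -
  define S1 :: "('a \<times> real) set" where "S1 = {(y, \<alpha>) | y \<alpha>. \<alpha> > h y - h x}"
  define S2 :: "('a \<times> real) set" where "S2 = (\<lambda>d. (x + d, 0)) ` T"
  have cS1: "convex S1"
  proof (rule convexI)
    fix p q u v assume p: "p \<in> S1" and q: "q \<in> S1" and u: "0 \<le> (u::real)" and v: "0 \<le> (v::real)" and uv: "u + v = 1"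
    obtain y1 a1 where p': "p = (y1, a1)" "a1 > h y1 - h x" using p by (auto simp: S1_def)
    obtain y2 a2 where q': "q = (y2, a2)" "a2 > h y2 - h x" using q by (auto simp: S1_def)
    have uu: "u = 1 - v" using uv by simp
    have "h ((1 - v) *\<^sub>R y1 + v *\<^sub>R y2) \<le> (1 - v) * h y1 + v * h y2"
      by (rule convex_onD[OF hc]) (use u v uv in auto)
    then have "h (u *\<^sub>R y1 + v *\<^sub>R y2) \<le> u * h y1 + v * h y2" by (simp only: uu)
    moreover have "u * h y1 + v * h y2 - h x \<le> u * a1 + v * a2" 
    proof -
      have "u * (h y1 - h x) \<le> u * a1" "v * (h y2 - h x) \<le> v * a2"
        using p'(2) q'(2) u v by (auto intro: mult_left_mono)
      then have "u * h y1 - u * h x \<le> u * a1" "v * h y2 - v * h x \<le> v * a2"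
        by (simp_all add: right_diff_distrib)
      moreover have "u * h x + v * h x = h x" using uv by (metis distrib_right mult_1)
      ultimately show ?thesis by linarith
    qed
    moreover have "u * a1 + v * a2 > u * (h y1 - h x) + v * (h y2 - h x)"
    proof (cases "u = 0")
      case True then show ?thesis using uv q'(2) by simp
    next
      case False then have "u * (h y1 - h x) < u * a1" using u p'(2) by simp
      moreover have "v * (h y2 - h x) \<le> v * a2" using v q'(2) by (simp add: mult_left_mono)
      ultimately show ?thesis by simp
    qed
    moreover have "u * h x + v * h x = h x" using uv by (metis distrib_right mult_1)
    ultimately have "h (u *\<^sub>R y1 + v *\<^sub>R y2) - h x < u * a1 + v * a2" by (simp add: algebra_simps)
    moreover have "u *\<^sub>R p + v *\<^sub>R q = (u *\<^sub>R y1 + v *\<^sub>R y2, u * a1 + v * a2)" using p' q' by simp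
    ultimately show "u *\<^sub>R p + v *\<^sub>R q \<in> S1" by (auto simp: S1_def)
  qed
  have cS2: "convex S2" unfolding S2_def
  proof (rule convexI)
    fix p q u v assume p: "p \<in> (\<lambda>d. (x + d, 0::real)) ` T" and q: "q \<in> (\<lambda>d. (x + d, 0::real)) ` T"
      and u: "0 \<le> (u::real)" and v: "0 \<le> (v::real)" and uv: "u + v = 1"
    obtain d1 d2 where d: "d1 \<in> T" "d2 \<in> T" "p = (x + d1, 0)" "q = (x + d2, 0)" using p q by auto
    have "u *\<^sub>R d1 + v *\<^sub>R d2 \<in> T" using convexD[OF Tc d(1,2) u v uv] .
    moreover have "u *\<^sub>R p + v *\<^sub>R q = (x + (u *\<^sub>R d1 + v *\<^sub>R d2), 0)"
      using d uv by (simp add: algebra_simps scaleR_add_left[symmetric])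
    ultimately show "u *\<^sub>R p + v *\<^sub>R q \<in> (\<lambda>d. (x + d, 0::real)) ` T" by auto
  qed
  have ne1: "S1 \<noteq> {}" by (auto simp: S1_def intro!: exI[of _ x] exI[of _ 1])
  have ne2: "S2 \<noteq> {}" using T0 by (auto simp: S2_def)
  have dj: "S1 \<inter> S2 = {}" using mn by (fastforce simp: S1_def S2_def)
  obtain a b where a0: "a \<noteq> 0" and s1: "\<forall>z\<in>S1. inner a z \<le> b" and s2: "\<forall>z\<in>S2. inner a z \<ge> b"
    using separating_hyperplane_sets[OF cS1 cS2 ne1 ne2 dj] by blast
  obtain a1 \<beta> where aeq: "a = (a1, \<beta>)" by (cases a)
  have S1I: "(y, \<alpha>) \<in> S1" if "\<alpha> > h y - h x" for y \<alpha> using that by (auto simp: S1_def)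
  have ineq1: "inner a1 y + \<beta> * \<alpha> \<le> b" if "\<alpha> > h y - h x" for y \<alpha>
    using s1 S1I[OF that] by (auto simp: aeq)
  have ineq2: "b \<le> inner a1 (x + d)" if "d \<in> T" for d
    using s2 that by (auto simp: aeq S2_def)
  have bx: "b \<le> inner a1 x" using ineq2[OF T0] by simp
  have bneg: "\<beta> \<le> 0"
  proof (rule ccontr)
    assume "\<not> \<beta> \<le> 0" then have bp: "\<beta> > 0" by simp
    define \<alpha> where "\<alpha> = max 1 ((b - inner a1 x) / \<beta> + 1)"
    have A: "inner a1 x + \<beta> * \<alpha> \<le> b" using ineq1[of x \<alpha>] by (simp add: \<alpha>_def)
    have "(b - inner a1 x) / \<beta> + 1 \<le> \<alpha>" by (simp add: \<alpha>_def)
    then have "\<beta> * ((b - inner a1 x) / \<beta> + 1) \<le> \<beta> * \<alpha>" using bp by (simp add: mult_left_mono)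
    moreover have "\<beta> * ((b - inner a1 x) / \<beta> + 1) = b - inner a1 x + \<beta>" using bp by (simp add: field_simps)
    ultimately have "b - inner a1 x + \<beta> \<le> \<beta> * \<alpha>" by simp
    then show False using A bp by simp
  qed
  have bnz: "\<beta> \<noteq> 0"
  proof
    assume b0: "\<beta> = 0"
    then have a10: "a1 \<noteq> 0" using a0 aeq by (auto simp: zero_prod_def)
    define y where "y = x + ((b - inner a1 x + 1) / (norm a1)\<^sup>2) *\<^sub>R a1"
    have "inner a1 y \<le> b" using ineq1[of y "h y - h x + 1"] b0 by simp
    moreover have "inner a1 y = inner a1 x + (b - inner a1 x + 1)"
      using a10 by (simp add: y_def inner_add_right power2_norm_eq_inner)
    ultimately show False by simp
  qed
  then have bn: "\<beta> < 0" using bneg by simp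
  define k where "k = (1 / (- \<beta>)) *\<^sub>R a1"
  have sub: "h x + inner k (y - x) \<le> h y" for y
  proof -
    have "\<beta> * (h y - h x) \<le> inner a1 (x - y)"
    proof (rule eps_le[of "-\<beta>"])
      show "0 \<le> - \<beta>" using bn by simp
      fix \<epsilon> :: real assume e: "\<epsilon> > 0"
      have "inner a1 y + \<beta> * (h y - h x + \<epsilon>) \<le> b" by (rule ineq1) (use e in simp)
      then show "\<beta> * (h y - h x) \<le> inner a1 (x - y) + - \<beta> * \<epsilon>"
        using bx by (simp add: algebra_simps inner_diff_right)
    qed
    then have "inner a1 (x - y) / \<beta> \<le> h y - h x" using bn by (simp add: divide_le_eq mult.commute)
    moreover have "inner a1 (x - y) / \<beta> = inner k (y - x)"
      using bn by (simp add: k_def inner_diff_right algebra_simps divide_simps)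
    ultimately show ?thesis by simp
  qed
  have ax: "inner a1 x \<le> b"
  proof (rule eps_le[of "-\<beta>"])
    show "0 \<le> - \<beta>" using bn by simp
    fix \<epsilon> :: real assume e: "\<epsilon> > 0"
    have "inner a1 x + \<beta> * \<epsilon> \<le> b" using ineq1[of x \<epsilon>] e by simp
    then show "inner a1 x \<le> b + - \<beta> * \<epsilon>" by simp
  qed
  have "0 \<le> inner k d" if d: "d \<in> T" for d
  proof -
    have "0 \<le> inner a1 d" using ineq2[OF d] ax by (simp add: inner_add_right)
    then show ?thesis using bn by (simp add: k_def divide_nonneg_neg)
  qed
  then show ?thesis using sub by blast
qed

lemma ereal_q_le:
  assumes n: "n > 0" and J: "J \<noteq> -\<infinity>"
  shows "ereal a \<le> (J - ereal r - ereal c) / ereal n \<longleftrightarrow> ereal (r + c + a * n) \<le> J"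
proof (cases J)
  case (real y)
  have "ereal a \<le> (J - ereal r - ereal c) / ereal n \<longleftrightarrow> a \<le> (y - r - c) / n" using n by (simp add: real)
  also have "\<dots> \<longleftrightarrow> a * n \<le> y - r - c" using n by (simp add: pos_le_divide_eq)
  also have "\<dots> \<longleftrightarrow> ereal (r + c + a * n) \<le> J" by (simp add: real algebra_simps)
  finally show ?thesis .
qed (use assms in auto)

lemma ereal_q_less:
  assumes n: "n > 0" and J: "J \<noteq> -\<infinity>"
  shows "ereal a < (J - ereal r - ereal c) / ereal n \<longleftrightarrow> ereal (r + c + a * n) < J"
proof (cases J)
  case (real y)
  have "ereal a < (J - ereal r - ereal c) / ereal n \<longleftrightarrow> a < (y - r - c) / n" using n by (simp add: real)
  also have "\<dots> \<longleftrightarrow> a * n < y - r - c" using n by (simp add: pos_less_divide_eq)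
  also have "\<dots> \<longleftrightarrow> ereal (r + c + a * n) < J" by (simp add: real algebra_simps)
  finally show ?thesis .
qed (use assms in auto)

lemma ereal_nonneg_eps:
  fixes z :: ereal
  assumes "\<And>e. e > 0 \<Longrightarrow> ereal (- e) \<le> z"
  shows "0 \<le> z"
proof (cases z)
  case (real y)
  have "0 \<le> y"
  proof (rule ccontr)
    assume "\<not> 0 \<le> y"
    then have "ereal (- (- y / 2)) \<le> z" using assms[of "- y / 2"] by simp
    then show False using \<open>\<not> 0 \<le> y\<close> by (simp add: real)
  qed
  then show ?thesis by (simp add: real)
next
  case MInf then show ?thesis using assms[of 1] by simp
qed simp

lemma frechet_char:
  fixes J :: "'a::euclidean_space \<Rightarrow> ereal"
  assumes Jx: "J xb = ereal r" and nm: "\<And>x. J x \<noteq> -\<infinity>"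
  shows "v \<in> frechet_subdiff J xb \<longleftrightarrow>
    (\<forall>e>0. \<exists>\<delta>>0. \<forall>x. 0 < norm (x - xb) \<and> norm (x - xb) < \<delta> \<longrightarrow>
        ereal (r + inner v (x - xb) - e * norm (x - xb)) \<le> J x)"
    (is "_ \<longleftrightarrow> ?R")
proof -
  define q where "q x = (J x - J xb - ereal (inner v (x - xb))) / ereal (norm (x - xb))" for x
  define B where "B \<epsilon> = {x. 0 < norm (x - xb) \<and> norm (x - xb) < \<epsilon>}" for \<epsilon> :: real
  have mem: "v \<in> frechet_subdiff J xb \<longleftrightarrow> 0 \<le> (SUP \<epsilon>\<in>{0<..}. INF x\<in>B \<epsilon>. q x)"
    using Jx by (simp add: frechet_subdiff_def q_def B_def)
  show ?thesis
  proof
    assume "v \<in> frechet_subdiff J xb"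
    then have S: "0 \<le> (SUP \<epsilon>\<in>{0<..}. INF x\<in>B \<epsilon>. q x)" using mem by simp
    show ?R
    proof (intro allI impI)
      fix e :: real assume e: "e > 0"
      have "ereal (- e) < 0" using e by simp
      then have "ereal (- e) < (SUP \<epsilon>\<in>{0<..}. INF x\<in>B \<epsilon>. q x)" using S by (rule order_less_le_trans)
      then obtain \<epsilon> where ep: "\<epsilon> \<in> {0<..}" and lt: "ereal (- e) < (INF x\<in>B \<epsilon>. q x)" by (auto simp: less_SUP_iff)
      show "\<exists>\<delta>>0. \<forall>x. 0 < norm (x - xb) \<and> norm (x - xb) < \<delta> \<longrightarrow>
        ereal (r + inner v (x - xb) - e * norm (x - xb)) \<le> J x"
      proof (intro exI[of _ \<epsilon>] conjI allI impI)
        show "0 < \<epsilon>" using ep by simp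
        fix x assume x: "0 < norm (x - xb) \<and> norm (x - xb) < \<epsilon>"
        then have "ereal (- e) < q x" using less_INF_D[OF lt] by (auto simp: B_def)
        then have "ereal (r + inner v (x - xb) + (- e) * norm (x - xb)) < J x"
          unfolding q_def Jx using ereal_q_less[OF _ nm] x by blast
        then show "ereal (r + inner v (x - xb) - e * norm (x - xb)) \<le> J x" by simp
      qed
    qed
  next
    assume R: ?R
    have "ereal (- e) \<le> (SUP \<epsilon>\<in>{0<..}. INF x\<in>B \<epsilon>. q x)" if e: "e > 0" for e
    proof -
      obtain \<delta> where d: "\<delta> > 0" and dd: "\<And>x. 0 < norm (x - xb) \<and> norm (x - xb) < \<delta> \<Longrightarrow>
        ereal (r + inner v (x - xb) - e * norm (x - xb)) \<le> J x" using R e by blast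
      have "ereal (- e) \<le> (INF x\<in>B \<delta>. q x)"
      proof (rule INF_greatest)
        fix x assume "x \<in> B \<delta>"
        then have x: "0 < norm (x - xb)" "norm (x - xb) < \<delta>" by (auto simp: B_def)
        have "ereal (r + inner v (x - xb) + (- e) * norm (x - xb)) \<le> J x" using dd x by simp
        then show "ereal (- e) \<le> q x" unfolding q_def Jx using ereal_q_le[OF x(1) nm] by blast
      qed
      then show ?thesis using d by (intro SUP_upper2[of \<delta>]) auto
    qed
    then have "0 \<le> (SUP \<epsilon>\<in>{0<..}. INF x\<in>B \<epsilon>. q x)" by (rule ereal_nonneg_eps)
    then show "v \<in> frechet_subdiff J xb" using mem by simp
  qed
qed

lemma punct:
  fixes x :: "'a::real_normed_vector"
  assumes "P x"
  shows "(\<forall>y. 0 < norm (y - x) \<and> norm (y - x) < \<delta> \<longrightarrow> P y) \<longleftrightarrow> (\<forall>y. norm (y - x) < \<delta> \<longrightarrow> P y)"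
proof (intro iffI allI impI)
  fix y assume A: "\<forall>y. 0 < norm (y - x) \<and> norm (y - x) < \<delta> \<longrightarrow> P y" and y: "norm (y - x) < \<delta>"
  show "P y"
  proof (cases "y = x")
    case True then show ?thesis using assms by simp
  next
    case False then show ?thesis using A y by simp
  qed
qed simp

definition fsub :: "('a::euclidean_space \<Rightarrow> real) \<Rightarrow> 'a \<Rightarrow> 'a \<Rightarrow> bool" where
  "fsub F x v \<longleftrightarrow> (\<forall>e>0. \<exists>\<delta>>0. \<forall>y. norm (y - x) < \<delta> \<longrightarrow> F x + inner v (y - x) - e * norm (y - x) \<le> F y)"

lemma frechet_F: "v \<in> frechet_subdiff (\<lambda>x. ereal (F x)) x \<longleftrightarrow> fsub F x v"
proof -
  have "v \<in> frechet_subdiff (\<lambda>x. ereal (F x)) x \<longleftrightarrow>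
    (\<forall>e>0. \<exists>\<delta>>0. \<forall>y. 0 < norm (y - x) \<and> norm (y - x) < \<delta> \<longrightarrow>
        ereal (F x + inner v (y - x) - e * norm (y - x)) \<le> ereal (F y))"
    by (rule frechet_char) auto
  also have "\<dots> \<longleftrightarrow> fsub F x v" unfolding fsub_def ereal_less_eq(3)
    by (subst punct) simp_all
  finally show ?thesis .
qed

definition fstat :: "('a::euclidean_space \<Rightarrow> real) \<Rightarrow> 'a set \<Rightarrow> 'a \<Rightarrow> bool" where
  "fstat F C x \<longleftrightarrow> (\<forall>e>0. \<exists>\<delta>>0. \<forall>y\<in>C. norm (y - x) < \<delta> \<longrightarrow> F x - e * norm (y - x) \<le> F y)"

lemma frechet_FC:
  "0 \<in> frechet_subdiff (\<lambda>x. ereal (F x) + ind C x) x \<longleftrightarrow> x \<in> C \<and> fstat F C x"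
proof (cases "x \<in> C")
  case False
  then show ?thesis by (simp add: frechet_subdiff_def ind_def)
next
  case True
  have J: "(\<lambda>y. ereal (F y) + ind C y) x = ereal (F x)" using True by (simp add: ind_def)
  have nm: "(\<lambda>y. ereal (F y) + ind C y) y \<noteq> -\<infinity>" for y by (simp add: ind_def)
  have "0 \<in> frechet_subdiff (\<lambda>x. ereal (F x) + ind C x) x \<longleftrightarrow>
    (\<forall>e>0. \<exists>\<delta>>0. \<forall>y. 0 < norm (y - x) \<and> norm (y - x) < \<delta> \<longrightarrow>
        ereal (F x + inner 0 (y - x) - e * norm (y - x)) \<le> ereal (F y) + ind C y)"
    by (rule frechet_char[where J="\<lambda>y. ereal (F y) + ind C y", OF J nm])
  also have "\<dots> \<longleftrightarrow> fstat F C x" unfolding fstat_def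
    by (intro all_cong1 imp_cong refl ex_cong1 conj_cong) (auto simp: ind_def)
  finally show ?thesis using True by simp
qed

lemma fsub_bound:
  fixes F :: "'a::euclidean_space \<Rightarrow> real"
  assumes L: "\<And>x y. \<bar>F x - F y\<bar> \<le> L * norm (x - y)" and v: "fsub F x v" and L0: "0 \<le> L"
  shows "norm v \<le> L"
proof (cases "v = 0")
  case True
  then show ?thesis using L0 by simp
next
  case False
  show ?thesis
  proof (rule field_le_epsilon)
    fix e :: real assume e: "e > 0"
    obtain \<delta> where d: "\<delta> > 0" and dd: "\<And>y. norm (y - x) < \<delta> \<Longrightarrow> F x + inner v (y - x) - e * norm (y - x) \<le> F y"
      using v e unfolding fsub_def by blast
    define y where "y = x + (\<delta> / 2 / norm v) *\<^sub>R v"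
    have ny: "norm (y - x) = \<delta> / 2" using False d by (simp add: y_def)
    have iv: "inner v (y - x) = \<delta> / 2 * norm v"
      using False by (simp add: y_def power2_norm_eq_inner[symmetric] power2_eq_square)
    have "F x + \<delta> / 2 * norm v - e * (\<delta> / 2) \<le> F y" using dd[of y] ny iv d by simp
    moreover have "F y - F x \<le> L * (\<delta> / 2)" using L[of y x] abs_ge_self[of "F y - F x"] unfolding ny by linarith
    ultimately have "(\<delta> / 2) * norm v \<le> (\<delta> / 2) * (L + e)" by (simp add: algebra_simps)
    then show "norm v \<le> L + e" using d by simp
  qed
qed

lemma taylor_bound:
  fixes S :: "'a::euclidean_space \<Rightarrow> 'b::euclidean_space" and DS :: "'a \<Rightarrow> ('a \<Rightarrow>\<^sub>L 'b)"
  assumes S_deriv: "\<And>x. (S has_derivative blinfun_apply (DS x)) (at x)"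
    and LD: "\<And>x y. norm (DS x - DS y) \<le> LD * norm (x - y)" and LD0: "0 \<le> LD"
  shows "norm (S y - S x - DS x (y - x)) \<le> LD * (norm (y - x))\<^sup>2"
proof -
  define r where "r = norm (y - x)"
  define f where "f z = S z - DS x z" for z
  have der: "(f has_derivative blinfun_apply (DS z - DS x)) (at z within cball x r)" for z
  proof -
    have "((\<lambda>z. DS x z) has_derivative (\<lambda>h. DS x h)) (at z)"
      by (rule bounded_linear.has_derivative[OF blinfun.bounded_linear_right has_derivative_ident])
    then have "(f has_derivative (\<lambda>h. DS z h - DS x h)) (at z)"
      unfolding f_def by (intro has_derivative_diff S_deriv)
    then show ?thesis by (auto intro: has_derivative_at_withinI simp: minus_blinfun.rep_eq fun_eq_iff)
  qed
  have bnd: "onorm (blinfun_apply (DS z - DS x)) \<le> LD * r" if "z \<in> cball x r" for z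
  proof -
    have "onorm (blinfun_apply (DS z - DS x)) = norm (DS z - DS x)" by (simp add: norm_blinfun.rep_eq)
    also have "\<dots> \<le> LD * norm (z - x)" by (rule LD)
    also have "\<dots> \<le> LD * r"
    proof (rule mult_left_mono)
      show "norm (z - x) \<le> r" using that by (simp add: dist_norm norm_minus_commute)
      show "0 \<le> LD" by (rule LD0)
    qed
    finally show ?thesis .
  qed
  have "norm (f y - f x) \<le> LD * r * norm (y - x)"
    by (rule differentiable_bound[OF convex_cball der bnd]) (auto simp: r_def dist_norm norm_minus_commute)
  moreover have "f y - f x = S y - S x - DS x (y - x)" by (simp add: f_def blinfun.diff_right)
  ultimately show ?thesis by (simp add: r_def power2_eq_square mult_ac)
qed

theorem lemma1:
  fixes S :: "'a::euclidean_space \<Rightarrow> 'b::euclidean_space"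
    and DS :: "'a \<Rightarrow> ('a \<Rightarrow>\<^sub>L 'b)"
    and g :: "'b \<Rightarrow> real"
    and C :: "'a set"
    and \<eta> :: real
    and xs :: 'a
  assumes S_deriv: "\<And>x. (S has_derivative blinfun_apply (DS x)) (at x)"
    and S_lip: "\<exists>L. lipschitz_on L UNIV S"
    and DS_lip: "\<exists>L. lipschitz_on L UNIV DS"
    and g_lip: "\<exists>L. lipschitz_on L UNIV g"
    and eta_pos: "\<eta> > 0"
    and g_weak: "convex_on UNIV (\<lambda>z. g z + \<eta> / 2 * (norm z)\<^sup>2)"
    and C_ne: "C \<noteq> {}"
    and C_closed: "closed C"
    and C_prox: "prox_regular C"
    and argmin_ne: "\<exists>x\<in>C. \<forall>y\<in>C. (g \<circ> S) x \<le> (g \<circ> S) y"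
  shows "0 \<in> frechet_subdiff (\<lambda>x. ereal ((g \<circ> S) x) + ind C x) xs
         \<longleftrightarrow> (\<exists>\<gamma>>0. stat_measure (g \<circ> S) C \<gamma> xs = 0)"
proof -
  define F where "F = g \<circ> S"
  obtain LS where LS: "lipschitz_on LS UNIV S" using S_lip by blast
  obtain Lg where Lg: "lipschitz_on Lg UNIV g" using g_lip by blast
  obtain LD where LD: "lipschitz_on LD UNIV DS" using DS_lip by blast
  have LS0: "0 \<le> LS" and Lg0: "0 \<le> Lg" and LD0: "0 \<le> LD"
    using LS Lg LD by (auto simp: lipschitz_on_nonneg)
  have Sn: "norm (S x - S y) \<le> LS * norm (x - y)" for x y using lipschitz_on_normD[OF LS] by simp
  have gn: "\<bar>g a - g b\<bar> \<le> Lg * norm (a - b)" for a b using lipschitz_on_normD[OF Lg, of a b] by simp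
  have DSn: "norm (DS x - DS y) \<le> LD * norm (x - y)" for x y using lipschitz_on_normD[OF LD] by simp
  define LF where "LF = Lg * LS"
  have LF0: "0 \<le> LF" using Lg0 LS0 by (simp add: LF_def)
  have Flip: "\<bar>F x - F y\<bar> \<le> LF * norm (x - y)" for x y
  proof -
    have "\<bar>F x - F y\<bar> \<le> Lg * norm (S x - S y)" using gn by (simp add: F_def)
    also have "\<dots> \<le> Lg * (LS * norm (x - y))" using Sn Lg0 by (rule mult_left_mono)
    finally show ?thesis by (simp add: LF_def mult_ac)
  qed
  have SM0: "0 \<le> stat_measure F C \<gamma> xs" for \<gamma>
    unfolding stat_measure_def by (rule INF_greatest) auto
  show ?thesis unfolding F_def[symmetric]
  proof
    assume H: "0 \<in> frechet_subdiff (\<lambda>x. ereal (F x) + ind C x) xs"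
    have xCf: "xs \<in> C \<and> fstat F C xs" by (rule frechet_FC[THEN iffD1, OF H])
    then have xC: "xs \<in> C" and fst: "fstat F C xs" by simp_all
    obtain U where UU: "open U \<and> C \<subseteq> U \<and> (\<forall>x\<in>U. \<exists>!p. p \<in> proj C x)"
      using C_prox unfolding prox_regular_def by (elim exE) (rule that)
    then have U: "open U" "C \<subseteq> U" and uqU: "\<And>x. x \<in> U \<Longrightarrow> \<exists>!p. p \<in> proj C x" by simp_all
    have xU: "xs \<in> U" using U(2) xC by blast
    obtain r where r: "r > 0" "ball xs r \<subseteq> U" using openE[OF U(1) xU] by blast
    define R where "R = r / 4"
    have R0: "R > 0" using r by (simp add: R_def)
    have "cball xs (3 * R) \<subseteq> ball xs r" using R0 by (simp add: R_def cball_subset_ball_iff)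
    then have sub: "cball xs (3 * R) \<subseteq> U" using r(2) by blast
    define A where "A = DS xs"
    define G where "G z = g z + \<eta> / 2 * (norm z)\<^sup>2" for z
    define aff where "aff y = S xs + A (y - xs)" for y
    define h where "h y = G (aff y) - \<eta> * inner (S xs) (A (y - xs))" for y
    define M where "M = Lg * LD + \<eta> / 2 * (norm A)\<^sup>2"
    have M0: "0 \<le> M" using Lg0 LD0 eta_pos by (simp add: M_def)
    have hconv: "convex_on UNIV h"
    proof (rule convex_onI)
      fix t y1 y2 assume t: "0 < t" "t < (1::real)"
      have affc: "aff ((1 - t) *\<^sub>R y1 + t *\<^sub>R y2) = (1 - t) *\<^sub>R aff y1 + t *\<^sub>R aff y2"
      proof -
        have eq: "(1 - t) *\<^sub>R y1 + t *\<^sub>R y2 - xs = (1 - t) *\<^sub>R (y1 - xs) + t *\<^sub>R (y2 - xs)" by (simp add: algebra_simps)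
        have "aff ((1 - t) *\<^sub>R y1 + t *\<^sub>R y2) = S xs + ((1 - t) *\<^sub>R A (y1 - xs) + t *\<^sub>R A (y2 - xs))"
          unfolding aff_def eq by (simp only: blinfun.add_right blinfun.scaleR_right)
        also have "\<dots> = (1 - t) *\<^sub>R aff y1 + t *\<^sub>R aff y2" by (simp add: aff_def algebra_simps)
        finally show ?thesis .
      qed
      have linc: "inner (S xs) (A ((1 - t) *\<^sub>R y1 + t *\<^sub>R y2 - xs)) = (1 - t) * inner (S xs) (A (y1 - xs)) + t * inner (S xs) (A (y2 - xs))"
      proof -
        have "(1 - t) *\<^sub>R y1 + t *\<^sub>R y2 - xs = (1 - t) *\<^sub>R (y1 - xs) + t *\<^sub>R (y2 - xs)" by (simp add: algebra_simps)
        then show ?thesis by (simp add: blinfun.add_right blinfun.scaleR_right inner_add_right)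
      qed
      have "G (aff ((1 - t) *\<^sub>R y1 + t *\<^sub>R y2)) \<le> (1 - t) * G (aff y1) + t * G (aff y2)"
        unfolding affc G_def using convex_onD[OF g_weak, of t "aff y1" "aff y2"] t by simp
      then show "h ((1 - t) *\<^sub>R y1 + t *\<^sub>R y2) \<le> (1 - t) * h y1 + t * h y2"
        unfolding h_def linc by (simp add: algebra_simps)
    qed simp
    have heq: "h y = g (aff y) + \<eta> / 2 * (norm (S xs))\<^sup>2 + \<eta> / 2 * (norm (A (y - xs)))\<^sup>2" for y
    proof -
      have "(norm (aff y))\<^sup>2 = (norm (S xs))\<^sup>2 + 2 * inner (S xs) (A (y - xs)) + (norm (A (y - xs)))\<^sup>2"
        unfolding aff_def by (rule norm_add_sq)
      then show ?thesis by (simp add: h_def G_def algebra_simps)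
    qed
    have herr: "\<bar>(h y - h xs) - (F y - F xs)\<bar> \<le> M * (norm (y - xs))\<^sup>2" for y
    proof -
      have affx: "aff xs = S xs" by (simp add: aff_def)
      have e1: "(h y - h xs) - (F y - F xs) = (g (aff y) - g (S y)) + \<eta> / 2 * (norm (A (y - xs)))\<^sup>2"
        using heq[of y] heq[of xs] affx by (simp add: F_def)
      have n1: "\<bar>g (aff y) - g (S y)\<bar> \<le> Lg * norm (aff y - S y)" by (rule gn)
      have n2: "norm (aff y - S y) = norm (S y - S xs - DS xs (y - xs))"
        by (simp add: aff_def A_def norm_minus_commute algebra_simps)
      have n3: "norm (S y - S xs - DS xs (y - xs)) \<le> LD * (norm (y - xs))\<^sup>2" by (rule taylor_bound[OF S_deriv DSn LD0])
      have "Lg * norm (aff y - S y) \<le> Lg * (LD * (norm (y - xs))\<^sup>2)"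
        using n2 n3 Lg0 by (simp add: mult_left_mono)
      then have b1: "\<bar>g (aff y) - g (S y)\<bar> \<le> Lg * LD * (norm (y - xs))\<^sup>2"
        using n1 by (simp add: mult_ac)
      have "norm (A (y - xs)) \<le> norm A * norm (y - xs)" by (rule norm_blinfun)
      then have "(norm (A (y - xs)))\<^sup>2 \<le> (norm A * norm (y - xs))\<^sup>2" by (simp add: power_mono)
      then have b2: "\<eta> / 2 * (norm (A (y - xs)))\<^sup>2 \<le> \<eta> / 2 * (norm A)\<^sup>2 * (norm (y - xs))\<^sup>2"
        using eta_pos by (simp add: power_mult_distrib mult_left_mono mult_ac)
      have "0 \<le> \<eta> / 2 * (norm (A (y - xs)))\<^sup>2" using eta_pos by simp
      then show ?thesis unfolding e1 M_def using b1 b2 by (simp add: abs_le_iff algebra_simps)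
    qed
    define T where "T = {d. \<forall>n. fnormal C xs n \<longrightarrow> inner n d \<le> 0}"
    have Tc: "convex T" unfolding T_def
    proof (rule convexI)
      fix a b u v assume a: "a \<in> {d. \<forall>n. fnormal C xs n \<longrightarrow> inner n d \<le> 0}"
        and b: "b \<in> {d. \<forall>n. fnormal C xs n \<longrightarrow> inner n d \<le> 0}" and u: "0 \<le> (u::real)" and v: "0 \<le> (v::real)"
      show "u *\<^sub>R a + v *\<^sub>R b \<in> {d. \<forall>n. fnormal C xs n \<longrightarrow> inner n d \<le> 0}"
      proof (intro CollectI allI impI)
        fix n assume n: "fnormal C xs n"
        have "inner n a \<le> 0" "inner n b \<le> 0" using a b n by auto
        then show "inner n (u *\<^sub>R a + v *\<^sub>R b) \<le> 0" using u v
          by (simp add: inner_add_right add_nonpos_nonpos mult_nonneg_nonpos)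
      qed
    qed
    have T0: "0 \<in> T" by (simp add: T_def)
    have hmin: "h xs \<le> h (xs + d)" if dT: "d \<in> T" for d
    proof (rule field_le_epsilon)
      fix e' :: real assume e': "e' > 0"
      define K where "K = norm d + 1 + LF"
      have K0: "K > 0" using LF0 norm_ge_zero[of d] unfolding K_def by linarith
      define e where "e = min 1 (e' / (2 * K))"
      have e0: "e > 0" "e \<le> 1" using e' K0 by (auto simp: e_def)
      have eK: "e * K \<le> e' / 2"
      proof -
        have "e \<le> e' / (2 * K)" by (simp add: e_def)
        moreover have "0 < 2 * K" using K0 by simp
        ultimately have "e * (2 * K) \<le> e'" using pos_le_divide_eq by blast
        then show ?thesis by simp
      qed
      obtain \<delta> where d0: "\<delta> > 0" and dst: "\<And>y. y \<in> C \<Longrightarrow> norm (y - xs) < \<delta> \<Longrightarrow> F xs - e * norm (y - xs) \<le> F y"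
        using fst e0(1) unfolding fstat_def by blast
      define t0 where "t0 = min 1 (min (\<delta> / (2 * (norm d + 1))) (e' / (2 * (M * (norm d)\<^sup>2 + 1))))"
      have p1: "0 < 2 * (norm d + 1)" by (simp add: add_nonneg_pos)
      have p2: "0 < 2 * (M * (norm d)\<^sup>2 + 1)"
      proof -
        have "0 \<le> M * (norm d)\<^sup>2" using M0 by simp
        then show ?thesis by (simp add: add_nonneg_pos)
      qed
      have t00: "t0 > 0" unfolding t0_def using divide_pos_pos[OF d0 p1] divide_pos_pos[OF e' p2] by simp
      have pold: "\<And>n. fnormal C xs n \<Longrightarrow> inner n d \<le> 0" using dT by (simp add: T_def)
      obtain t c where t: "0 < t" "t \<le> t0" and cC: "c \<in> C" and tc: "norm (c - (xs + t *\<^sub>R d)) \<le> e * t"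
        using tangent_of_polar[OF C_closed uqU xC sub R0 pold e0(1) t00] by blast
      have t1: "t \<le> 1" using t by (simp add: t0_def)
      have td: "t * (norm d + 1) < \<delta>"
      proof -
        have "t \<le> \<delta> / (2 * (norm d + 1))" using t by (simp add: t0_def)
        moreover have "0 < 2 * (norm d + 1)" by (simp add: add_nonneg_pos)
        ultimately have "t * (2 * (norm d + 1)) \<le> \<delta>" using pos_le_divide_eq by blast
        then show ?thesis using d0 t by (simp add: algebra_simps)
      qed
      have tM: "M * (norm d)\<^sup>2 * t \<le> e' / 2"
      proof -
        have "t \<le> e' / (2 * (M * (norm d)\<^sup>2 + 1))" using t by (simp add: t0_def)
        moreover have "0 < 2 * (M * (norm d)\<^sup>2 + 1)"
      proof -
        have "0 \<le> M * (norm d)\<^sup>2" using M0 by simp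
        then show ?thesis by (simp add: add_nonneg_pos)
      qed
        ultimately have "t * (2 * (M * (norm d)\<^sup>2 + 1)) \<le> e'" using pos_le_divide_eq by blast
        then show ?thesis using t by (simp add: algebra_simps)
      qed
      have cx: "norm (c - xs) \<le> t * (norm d + 1)"
      proof -
        have "c - xs = (c - (xs + t *\<^sub>R d)) + t *\<^sub>R d" by simp
        then have "norm (c - xs) \<le> norm (c - (xs + t *\<^sub>R d)) + norm (t *\<^sub>R d)" by (metis norm_triangle_ineq)
        also have "\<dots> \<le> e * t + t * norm d" using tc t by simp
        also have "e * t \<le> t" using e0 t by simp
        finally show ?thesis by (simp add: algebra_simps)
      qed
      have "F xs - e * norm (c - xs) \<le> F c" using dst[OF cC] cx td by simp
      moreover have "e * norm (c - xs) \<le> e * (t * (norm d + 1))" using cx e0 by (simp add: mult_left_mono)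
      ultimately have Fc: "F xs - e * (t * (norm d + 1)) \<le> F c" by simp
      have "\<bar>F c - F (xs + t *\<^sub>R d)\<bar> \<le> LF * norm (c - (xs + t *\<^sub>R d))" by (rule Flip)
      also have "\<dots> \<le> LF * (e * t)" using tc LF0 by (simp add: mult_left_mono)
      finally have Fd: "F c - LF * (e * t) \<le> F (xs + t *\<^sub>R d)" by (simp add: abs_le_iff)
      have "\<bar>(h (xs + t *\<^sub>R d) - h xs) - (F (xs + t *\<^sub>R d) - F xs)\<bar> \<le> M * (norm (xs + t *\<^sub>R d - xs))\<^sup>2"
        by (rule herr)
      also have "(norm (xs + t *\<^sub>R d - xs))\<^sup>2 = t * (t * (norm d)\<^sup>2)" using t by (simp add: power2_eq_square)
      finally have hd: "F (xs + t *\<^sub>R d) - F xs - M * (t * (t * (norm d)\<^sup>2)) \<le> h (xs + t *\<^sub>R d) - h xs"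
        by (simp add: abs_le_iff)
      define Q where "Q = e * K + M * (norm d)\<^sup>2 * t"
      have "h (xs + t *\<^sub>R d) - h xs \<ge> - (t * Q)"
      proof -
        have "t * Q = e * (t * (norm d + 1)) + LF * (e * t) + M * (t * (t * (norm d)\<^sup>2))"
          by (simp add: Q_def K_def algebra_simps)
        then show ?thesis using Fc Fd hd by linarith
      qed
      moreover have "h (xs + t *\<^sub>R d) \<le> (1 - t) * h xs + t * h (xs + d)"
      proof -
        have "h ((1 - t) *\<^sub>R xs + t *\<^sub>R (xs + d)) \<le> (1 - t) * h xs + t * h (xs + d)"
          by (rule convex_onD[OF hconv]) (use t t1 in auto)
        moreover have "(1 - t) *\<^sub>R xs + t *\<^sub>R (xs + d) = xs + t *\<^sub>R d" by (simp add: algebra_simps)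
        ultimately show ?thesis by simp
      qed
      ultimately have "t * (- Q) \<le> t * (h (xs + d) - h xs)" by (simp add: algebra_simps)
      then have "- Q \<le> h (xs + d) - h xs" using mult_le_cancel_left_pos[of t "- Q" "h (xs + d) - h xs"] t by simp
      moreover have "Q \<le> e'" using eK tM by (simp add: Q_def)
      ultimately show "h xs \<le> h (xs + d) + e'" by simp
    qed
    obtain k where k1: "\<forall>y. h xs + inner k (y - xs) \<le> h y" and k2: "\<forall>d\<in>T. 0 \<le> inner k d"
      using convex_min_sep[OF hconv Tc T0 hmin] by blast
    have fnk: "fnormal C xs (- k)"
    proof (rule bipolar)
      fix d assume "\<And>n. fnormal C xs n \<Longrightarrow> inner n d \<le> 0"
      then have "d \<in> T" by (simp add: T_def)
      then show "inner (- k) d \<le> 0" using k2 by simp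
    qed
    have fsk: "fsub F xs k" unfolding fsub_def
    proof (intro allI impI)
      fix e :: real assume e: "e > 0"
      show "\<exists>\<delta>>0. \<forall>y. norm (y - xs) < \<delta> \<longrightarrow> F xs + inner k (y - xs) - e * norm (y - xs) \<le> F y"
      proof (intro exI[of _ "e / (M + 1)"] conjI allI impI)
        show "0 < e / (M + 1)" using e M0 by simp
        fix y assume y: "norm (y - xs) < e / (M + 1)"
        have "M * norm (y - xs) \<le> e"
        proof -
          have "M * norm (y - xs) \<le> (M + 1) * norm (y - xs)" by (simp add: algebra_simps)
          also have "\<dots> \<le> (M + 1) * (e / (M + 1))" using y M0 by (intro mult_left_mono) auto
          also have "\<dots> = e" using M0 by simp
          finally show ?thesis .
        qed
        then have "M * (norm (y - xs))\<^sup>2 \<le> e * norm (y - xs)"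
          by (simp add: power2_eq_square mult_right_mono mult.assoc[symmetric])
        moreover have "h xs + inner k (y - xs) \<le> h y" using k1 by blast
        moreover have "\<bar>(h y - h xs) - (F y - F xs)\<bar> \<le> M * (norm (y - xs))\<^sup>2" by (rule herr)
        ultimately show "F xs + inner k (y - xs) - e * norm (y - xs) \<le> F y" by (simp add: abs_le_iff)
      qed
    qed
    have kF: "k \<in> frechet_subdiff (\<lambda>x. ereal (F x)) xs" using fsk frechet_F by blast
    obtain \<gamma> where g0: "\<gamma> > 0" and pr: "xs \<in> proj C (xs - \<gamma> *\<^sub>R k)"
    proof (cases "k = 0")
      case True
      have "xs \<in> proj C (xs - 1 *\<^sub>R k)" using xC True by (simp add: proj_def)
      then show ?thesis using that[of 1] by simp
    next
      case False
      then have nk: "- k \<noteq> 0" by simp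
      have "xs \<in> proj C (xs + R *\<^sub>R ((1 / norm (- k)) *\<^sub>R (- k)))"
        by (rule fnormal_prox[OF C_closed uqU xC sub R0 nk fnk])
      moreover have "xs + R *\<^sub>R ((1 / norm (- k)) *\<^sub>R (- k)) = xs - (R / norm k) *\<^sub>R k" by simp
      ultimately show ?thesis using that[of "R / norm k"] R0 False by simp
    qed
    have "0 \<in> {(1 / \<gamma>) *\<^sub>R (xs - p) | p v. v \<in> frechet_subdiff (\<lambda>x. ereal (F x)) xs \<and> p \<in> proj C (xs - \<gamma> *\<^sub>R v)}"
      using kF pr by force
    then have "stat_measure F C \<gamma> xs \<le> ereal (norm (0::'a))"
      unfolding stat_measure_def by (rule INF_lower)
    then have "stat_measure F C \<gamma> xs = 0" using SM0[of \<gamma>] by (simp add: zero_ereal_def)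
    then show "\<exists>\<gamma>>0. stat_measure F C \<gamma> xs = 0" using g0 by blast
  next
    assume "\<exists>\<gamma>>0. stat_measure F C \<gamma> xs = 0"
    then obtain \<gamma> where g0: "\<gamma> > 0" and st: "stat_measure F C \<gamma> xs = 0" by blast
    have ex: "\<exists>v p. fsub F xs v \<and> p \<in> proj C (xs - \<gamma> *\<^sub>R v) \<and> norm (xs - p) < \<gamma> / real (Suc k)" for k
    proof -
      have "(INF s \<in> {(1 / \<gamma>) *\<^sub>R (xs - p) | p v.
                 v \<in> frechet_subdiff (\<lambda>x. ereal (F x)) xs \<and> p \<in> proj C (xs - \<gamma> *\<^sub>R v)}.
        ereal (norm s)) < ereal (1 / real (Suc k))"
        using st unfolding stat_measure_def by simp
      then obtain s where sS: "s \<in> {(1 / \<gamma>) *\<^sub>R (xs - p) | p v.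
                 v \<in> frechet_subdiff (\<lambda>x. ereal (F x)) xs \<and> p \<in> proj C (xs - \<gamma> *\<^sub>R v)}"
        and sl: "ereal (norm s) < ereal (1 / real (Suc k))" unfolding INF_less_iff by blast
      obtain p v where s: "s = (1 / \<gamma>) *\<^sub>R (xs - p)" and v: "v \<in> frechet_subdiff (\<lambda>x. ereal (F x)) xs"
        and p: "p \<in> proj C (xs - \<gamma> *\<^sub>R v)" using sS by blast
      have "norm (xs - p) / \<gamma> < 1 / real (Suc k)" using sl g0 by (simp add: s)
      then have "norm (xs - p) < \<gamma> / real (Suc k)" using g0 by (simp add: field_simps)
      then show ?thesis using v p frechet_F by blast
    qed
    then obtain V P where VP: "\<And>k. fsub F xs (V k)" "\<And>k. P k \<in> proj C (xs - \<gamma> *\<^sub>R V k)"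
      "\<And>k. norm (xs - P k) < \<gamma> / real (Suc k)" by metis
    have Vb: "V k \<in> cball 0 LF" for k using fsub_bound[OF Flip VP(1) LF0] by simp
    have "seq_compact (cball (0::'a) LF)" by (rule compact_imp_seq_compact) simp
    then obtain v r where vS: "v \<in> cball 0 LF" and r: "strict_mono r" and lim: "(V \<circ> r) \<longlonglongrightarrow> v"
      using Vb by (metis seq_compactE)
    have glim: "(\<lambda>k. \<gamma> / real (Suc k)) \<longlonglongrightarrow> 0"
      using tendsto_mult[OF tendsto_const[of \<gamma>] LIMSEQ_inverse_real_of_nat] by (simp add: divide_inverse)
    have Pr: "(P \<circ> r) \<longlonglongrightarrow> xs"
    proof -
      have g2: "(\<lambda>k. \<gamma> / real (Suc (r k))) \<longlonglongrightarrow> 0"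
        using LIMSEQ_subseq_LIMSEQ[OF glim r] by (simp add: comp_def)
      have ev: "eventually (\<lambda>k. norm ((P \<circ> r) k - xs) \<le> \<gamma> / real (Suc (r k))) sequentially"
        using VP(3) by (intro always_eventually allI) (simp add: norm_minus_commute less_imp_le)
      have "(\<lambda>k. (P \<circ> r) k - xs) \<longlonglongrightarrow> 0" by (rule Lim_null_comparison[OF ev g2])
      then show ?thesis by (simp add: LIM_zero_iff comp_def)
    qed
    have PC: "P k \<in> C" for k using VP(2) by (simp add: proj_def)
    have xC: "xs \<in> C" by (rule closed_sequentially[OF C_closed _ Pr]) (simp add: PC)
    have fv: "fsub F xs v" unfolding fsub_def
    proof (intro allI impI)
      fix e :: real assume e: "e > 0"
      obtain k where k: "norm ((V \<circ> r) k - v) < e / 2"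
        using lim e unfolding LIMSEQ_iff by (metis half_gt_zero order_refl)
      obtain \<delta> where d0: "\<delta> > 0" and dd: "\<And>y. norm (y - xs) < \<delta> \<Longrightarrow> F xs + inner (V (r k)) (y - xs) - e / 2 * norm (y - xs) \<le> F y"
        using VP(1)[of "r k"] e unfolding fsub_def by (meson half_gt_zero)
      show "\<exists>\<delta>>0. \<forall>y. norm (y - xs) < \<delta> \<longrightarrow> F xs + inner v (y - xs) - e * norm (y - xs) \<le> F y"
      proof (intro exI[of _ \<delta>] conjI allI impI)
        fix y assume y: "norm (y - xs) < \<delta>"
        have "inner (v - V (r k)) (y - xs) \<le> norm (v - V (r k)) * norm (y - xs)" by (rule norm_cauchy_schwarz)
        also have "\<dots> \<le> e / 2 * norm (y - xs)" using k by (intro mult_right_mono) (auto simp: norm_minus_commute)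
        finally have "inner v (y - xs) \<le> inner (V (r k)) (y - xs) + e / 2 * norm (y - xs)"
          by (simp add: inner_diff_left)
        then show "F xs + inner v (y - xs) - e * norm (y - xs) \<le> F y" using dd[OF y] by simp
      qed (rule d0)
    qed
    have prox: "norm (\<gamma> *\<^sub>R v) \<le> norm (xs - \<gamma> *\<^sub>R v - c)" if cC: "c \<in> C" for c
    proof (rule LIMSEQ_le)
      show "(\<lambda>k. norm (xs - \<gamma> *\<^sub>R (V \<circ> r) k - (P \<circ> r) k)) \<longlonglongrightarrow> norm (\<gamma> *\<^sub>R v)"
        using tendsto_norm[OF tendsto_diff[OF tendsto_diff[OF tendsto_const[of xs] tendsto_scaleR[OF tendsto_const[of \<gamma>] lim]] Pr]]
        by (simp add: comp_def)
      show "(\<lambda>k. norm (xs - \<gamma> *\<^sub>R (V \<circ> r) k - c)) \<longlonglongrightarrow> norm (xs - \<gamma> *\<^sub>R v - c)"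
        by (rule tendsto_norm[OF tendsto_diff[OF tendsto_diff[OF tendsto_const tendsto_scaleR[OF tendsto_const lim]] tendsto_const]])
      show "\<exists>N. \<forall>n\<ge>N. norm (xs - \<gamma> *\<^sub>R (V \<circ> r) n - (P \<circ> r) n) \<le> norm (xs - \<gamma> *\<^sub>R (V \<circ> r) n - c)"
        using VP(2) cC by (intro exI[of _ 0] allI impI) (simp add: proj_def)
    qed
    have vc: "- ((norm (c - xs))\<^sup>2 / (2 * \<gamma>)) \<le> inner v (c - xs)" if cC: "c \<in> C" for c
    proof -
      have eqc: "xs - \<gamma> *\<^sub>R v - c = (xs - c) - \<gamma> *\<^sub>R v" by (simp add: algebra_simps)
      have "(norm (\<gamma> *\<^sub>R v))\<^sup>2 \<le> (norm ((xs - c) - \<gamma> *\<^sub>R v))\<^sup>2"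
        using prox[OF cC] unfolding eqc by (intro power_mono) auto
      also have "\<dots> = (norm (xs - c))\<^sup>2 - 2 * inner (xs - c) (\<gamma> *\<^sub>R v) + (norm (\<gamma> *\<^sub>R v))\<^sup>2"
        by (rule norm_diff_sq)
      finally have "2 * \<gamma> * inner v (xs - c) \<le> (norm (c - xs))\<^sup>2"
        by (simp add: norm_minus_commute inner_commute mult_ac)
      moreover have "inner v (xs - c) = - inner v (c - xs)" by (simp add: inner_diff_right)
      ultimately have "- (2 * \<gamma>) * inner v (c - xs) \<le> (norm (c - xs))\<^sup>2" by simp
      then have "- inner v (c - xs) \<le> (norm (c - xs))\<^sup>2 / (2 * \<gamma>)" using g0 by (simp add: pos_le_divide_eq mult_ac)
      then show ?thesis by simp
    qed
    have "fstat F C xs" unfolding fstat_def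
    proof (intro allI impI)
      fix e :: real assume e: "e > 0"
      obtain \<delta> where d0: "\<delta> > 0" and dd: "\<And>y. norm (y - xs) < \<delta> \<Longrightarrow> F xs + inner v (y - xs) - e / 2 * norm (y - xs) \<le> F y"
        using fv e unfolding fsub_def by (meson half_gt_zero)
      show "\<exists>\<delta>>0. \<forall>y\<in>C. norm (y - xs) < \<delta> \<longrightarrow> F xs - e * norm (y - xs) \<le> F y"
      proof (intro exI[of _ "min \<delta> (\<gamma> * e)"] conjI ballI impI)
        show "0 < min \<delta> (\<gamma> * e)" using d0 g0 e by simp
        fix y assume yC: "y \<in> C" and y: "norm (y - xs) < min \<delta> (\<gamma> * e)"
        have "(norm (y - xs))\<^sup>2 / (2 * \<gamma>) \<le> e / 2 * norm (y - xs)"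
        proof -
          have "norm (y - xs) * norm (y - xs) \<le> (\<gamma> * e) * norm (y - xs)" using y by (intro mult_right_mono) auto
          then show ?thesis using g0 by (simp add: power2_eq_square pos_divide_le_eq mult_ac)
        qed
        then show "F xs - e * norm (y - xs) \<le> F y" using dd[of y] y vc[OF yC] by simp
      qed
    qed
    then show "0 \<in> frechet_subdiff (\<lambda>x. ereal (F x) + ind C x) xs" using frechet_FC xC by blast
  qed
qed

end
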